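(* Let $j$ range over $\{1,\dots,N\}$ and suppose, for each $j$, that $m_j\in\{1,\dots,\dim(V_j)-1\}$ satisfies $0<\lambda^j_{m_j+1}<\infty$. Let $V_0$ be the GenEO coarse space built from these $m_j$ and $\Theta=(\min_{1\le j\le N}\lambda^j_{m_j+1})^{-1}$. Then for every $v\in V^h$, $$\inf_{z\in V_0}\|v-z\|_a^2\le k_0^2\,\Theta\,\|v\|_a^2.$$
   Context: Let $\Omega\subset\mathbb{R}^d$ be a bounded polygonal/Lipschitz polyhedral domain, $A:\Omega\to\mathbb{R}^{d\times d}$ symmetric with $|\xi|^2\le A(x)\xi\cdot\xi\le a_{\max}|\xi|^2$, and $c^+\in L^\infty(\Omega)$, $c^+\ge0$. Let $a(u,v)=\int_\Omega(A\nabla u\cdot\nabla v+c^+uv)$ on $H^1_0(\Omega)$, $\|u\|_a=a(u,u)^{1/2}$. Let $\mathcal{T}_h$ be a shape-regular triangulation and $V^h\subset H^1_0(\Omega)$ a conforming nodal finite element space. Non-overlapping subdomains $\Omega'_i$ ($i=1,\dots,N$), resolved by $\mathcal{T}_h$, are extended by layers of elements to overlapping $\Omega_i$. Let $\widetilde V_j=\{v|_{\Omega_j}:v\in V^h\}$ with nodal basis $\{\phi^j_k\}$, $V_j=\{v\in\widetilde V_j:v=0\text{ on }\partial\Omega_j\}$, $a_{\Omega_j}(u,v)=\int_{\Omega_j}(A\nabla u\cdot\nabla v+c^+uv)$, $R_j^\top:V_j\to V^h$ extension by zero, and $k_0=\max_{\tau\in\mathcal{T}_h}\#\{j:\tau\subset\Omega_j\}$.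 For a node $k$ let $\mu_k$ be the number of subdomains for which $k$ is an interior degree of freedom; $\Xi_j:\widetilde V_j\to V_j$, $\Xi_j(\sum_k v_k\phi^j_k)=\sum_{k\text{ interior to }\Omega_j}\mu_k^{-1}v_k\phi^j_k$. The generalised eigenproblem on $\Omega_j$: find $p\in\widetilde V_j\setminus\{0\}$, $\lambda$, with $a_{\Omega_j}(p,v)=\lambda\,a_{\Omega_j}(\Xi_j p,\Xi_j v)$ for all $v\in\widetilde V_j$; eigenvalues ordered $\lambda^j_1\le\lambda^j_2\le\cdots$ with eigenfunctions $p^j_l$. The GenEO coarse space is $V_0=\mathrm{span}\{R_j^\top\Xi_j(p^j_l):1\le l\le m_j,\ 1\le j\le N\}$. *)

theory Defs
  imports "HOL-Analysis.Analysis" "HOL-Library.Function_Algebras"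
begin

definition fscale :: "real \<Rightarrow> ('a \<Rightarrow> real) \<Rightarrow> ('a \<Rightarrow> real)" where
  "fscale r f = (\<lambda>x. r * f x)"

abbreviation fspan :: "('a \<Rightarrow> real) set \<Rightarrow> ('a \<Rightarrow> real) set" where
  "fspan \<equiv> module.span fscale"

abbreviation fdim :: "('a \<Rightarrow> real) set \<Rightarrow> nat" where
  "fdim \<equiv> vector_space.dim fscale"

definition mesh_of :: "'a::euclidean_space set set \<Rightarrow> 'a set \<Rightarrow> bool" where
  "mesh_of T \<Omega> \<longleftrightarrow> triangulation T \<and> (\<forall>\<tau>\<in>T. int DIM('a) simplex \<tau>)
     \<and> \<Omega> = interior (\<Union>T) \<and> closure \<Omega> = \<Union>T"

definition polyhedral_domain :: "'a::euclidean_space set \<Rightarrow> 'a set set \<Rightarrow> bool" where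
  "polyhedral_domain \<Omega> T \<longleftrightarrow> open \<Omega> \<and> connected \<Omega> \<and> bounded \<Omega> \<and> \<Omega> \<noteq> {} \<and> mesh_of T \<Omega>"

text \<open>Conforming nodal finite element space \<open>Vh \<subseteq> H^1_0(\<Omega>)\<close> on the mesh \<open>T\<close>:
  continuous, piecewise polynomial functions vanishing outside \<open>\<Omega>\<close>, with a nodal
  basis \<open>\<phi> k\<close> indexed by the (interior) nodes \<open>k \<in> X\<close>; the basis function of a node
  vanishes on every element not containing the node.\<close>
definition nodal_fe_space ::
  "'a::euclidean_space set set \<Rightarrow> 'a set \<Rightarrow> 'a set \<Rightarrow> ('a \<Rightarrow> 'a \<Rightarrow> real) \<Rightarrow> ('a \<Rightarrow> real) set \<Rightarrow> bool" where
  "nodal_fe_space T \<Omega> X \<phi> Vh \<longleftrightarrow>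
     finite X \<and> X \<subseteq> \<Omega> \<and> Vh = fspan (\<phi> ` X)
     \<and> (\<forall>k\<in>X. \<forall>l\<in>X. \<phi> k l = (if k = l then 1 else 0))
     \<and> (\<forall>k\<in>X. \<forall>\<tau>\<in>T. k \<notin> \<tau> \<longrightarrow> (\<forall>x\<in>\<tau>. \<phi> k x = 0))
     \<and> (\<forall>v\<in>Vh. continuous_on UNIV v \<and> (\<forall>x. x \<notin> \<Omega> \<longrightarrow> v x = 0)
           \<and> (\<forall>\<tau>\<in>T. \<exists>q. polynomial_function q \<and> (\<forall>x\<in>\<tau>. v x = q x)))"

definition grad :: "('a::euclidean_space \<Rightarrow> real) \<Rightarrow> 'a \<Rightarrow> 'a" where
  "grad u x = (SOME g. GDERIV u x :> g)"

definition aform :: "('a::euclidean_space \<Rightarrow> 'a \<Rightarrow> 'a) \<Rightarrow> ('a \<Rightarrow> real) \<Rightarrow> 'a set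
    \<Rightarrow> ('a \<Rightarrow> real) \<Rightarrow> ('a \<Rightarrow> real) \<Rightarrow> real" where
  "aform A c S u v = (LINT x|lebesgue_on S. A x (grad u x) \<bullet> grad v x + c x * u x * v x)"

definition anorm :: "('a::euclidean_space \<Rightarrow> 'a \<Rightarrow> 'a) \<Rightarrow> ('a \<Rightarrow> real) \<Rightarrow> 'a set
    \<Rightarrow> ('a \<Rightarrow> real) \<Rightarrow> real" where
  "anorm A c \<Omega> u = sqrt (aform A c \<Omega> u u)"

definition add_layer :: "'a set set \<Rightarrow> 'a set set \<Rightarrow> 'a set set" where
  "add_layer T S = S \<union> {\<tau>\<in>T. \<exists>\<sigma>\<in>S. \<tau> \<inter> \<sigma> \<noteq> {}}"

text \<open>Restriction of a function to a set (extended by zero outside);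
  also used as extension by zero \<open>R_j^T\<close>.\<close>
definition restr :: "'a set \<Rightarrow> ('a \<Rightarrow> real) \<Rightarrow> ('a \<Rightarrow> real)" where
  "restr S v = (\<lambda>x. if x \<in> S then v x else 0)"

definition Vtilde :: "('a \<Rightarrow> real) set \<Rightarrow> 'a::topological_space set \<Rightarrow> ('a \<Rightarrow> real) set" where
  "Vtilde Vh Oj = restr (closure Oj) ` Vh"

definition Vloc :: "('a \<Rightarrow> real) set \<Rightarrow> 'a::topological_space set \<Rightarrow> ('a \<Rightarrow> real) set" where
  "Vloc Vh Oj = {w \<in> Vtilde Vh Oj. \<forall>x\<in>frontier Oj. w x = 0}"

definition RT :: "'a::topological_space set \<Rightarrow> ('a \<Rightarrow> real) \<Rightarrow> ('a \<Rightarrow> real)" where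
  "RT Oj w = restr (closure Oj) w"

definition mu :: "nat \<Rightarrow> (nat \<Rightarrow> 'a set) \<Rightarrow> 'a \<Rightarrow> nat" where
  "mu N Om k = card {j\<in>{1..N}. k \<in> Om j}"

text \<open>Partition of unity operator \<open>\<Xi>_j\<close>: nodal coefficients of \<open>w \<in> \<tilde>V_j\<close> are its
  nodal values; keep the interior nodes of \<open>\<Omega>_j\<close>, weighted by \<open>1/\<mu>_k\<close>.\<close>
definition Xi :: "nat \<Rightarrow> (nat \<Rightarrow> 'a::topological_space set) \<Rightarrow> 'a set \<Rightarrow> ('a \<Rightarrow> 'a \<Rightarrow> real)
    \<Rightarrow> nat \<Rightarrow> ('a \<Rightarrow> real) \<Rightarrow> ('a \<Rightarrow> real)" where
  "Xi N Om X \<phi> j w = (\<lambda>x. \<Sum>k\<in>{k\<in>X. k \<in> Om j}.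
       (w k / real (mu N Om k)) * restr (closure (Om j)) (\<phi> k) x)"

definition k0 :: "'a::topological_space set set \<Rightarrow> nat \<Rightarrow> (nat \<Rightarrow> 'a set) \<Rightarrow> nat" where
  "k0 T N Om = Max ((\<lambda>\<tau>. card {j\<in>{1..N}. \<tau> \<subseteq> closure (Om j)}) ` T)"

text \<open>\<open>(\<lambda>,p)\<close> is an eigenpair of \<open>a_{\<Omega>_j}(p,v) = \<lambda> a_{\<Omega>_j}(\<Xi>_j p, \<Xi>_j v)\<close> on \<open>W = \<tilde>V_j\<close>;
  the eigenvalue \<open>+\<infinity>\<close> means \<open>a_{\<Omega>_j}(\<Xi>_j p, \<Xi>_j v) = 0\<close> for all \<open>v\<close>.\<close>
definition geneo_eigenpair :: "(('a \<Rightarrow> real) \<Rightarrow> ('a \<Rightarrow> real) \<Rightarrow> real) \<Rightarrow> (('a \<Rightarrow> real) \<Rightarrow> ('a \<Rightarrow> real))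
    \<Rightarrow> ('a \<Rightarrow> real) set \<Rightarrow> ereal \<Rightarrow> ('a \<Rightarrow> real) \<Rightarrow> bool" where
  "geneo_eigenpair aj Xj W lam p \<longleftrightarrow> p \<in> W \<and> p \<noteq> 0 \<and>
     (case lam of
        ereal r \<Rightarrow> (\<forall>v\<in>W. aj p v = r * aj (Xj p) (Xj v))
      | PInfty \<Rightarrow> (\<forall>v\<in>W. aj (Xj p) (Xj v) = 0)
      | MInfty \<Rightarrow> False)"

text \<open>\<open>p 1, ..., p n\<close> (\<open>n = dim W\<close>) is a basis of \<open>W\<close> of eigenfunctions, with
  eigenvalues \<open>lam 1 \<le> lam 2 \<le> ... \<le> lam n\<close> (counted with multiplicity).\<close>
definition geneo_eigensystem :: "(('a \<Rightarrow> real) \<Rightarrow> ('a \<Rightarrow> real) \<Rightarrow> real) \<Rightarrow> (('a \<Rightarrow> real) \<Rightarrow> ('a \<Rightarrow> real))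
    \<Rightarrow> ('a \<Rightarrow> real) set \<Rightarrow> (nat \<Rightarrow> ereal) \<Rightarrow> (nat \<Rightarrow> ('a \<Rightarrow> real)) \<Rightarrow> bool" where
  "geneo_eigensystem aj Xj W lam p \<longleftrightarrow>
     (let n = fdim W in
        (\<forall>l\<in>{1..n}. geneo_eigenpair aj Xj W (lam l) (p l))
      \<and> card (p ` {1..n}) = n \<and> fspan (p ` {1..n}) = W
      \<and> (\<forall>l l'. 1 \<le> l \<and> l \<le> l' \<and> l' \<le> n \<longrightarrow> lam l \<le> lam l'))"

end

theory Submission
  imports Defs
begin


lemma fsum_apply: "(\<Sum>i\<in>I. f i) x = (\<Sum>i\<in>I. (f i x :: real))"
  by (induction I rule: infinite_finite_induct) auto

lemma fscale_apply[simp]: "fscale r f x = r * f x"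
  by (simp add: fscale_def)

lemma module_fscale: "module fscale"
  by unfold_locales (auto simp: fscale_def fun_eq_iff algebra_simps)

lemma dsum_filter:
  assumes "finite I"
  shows "(\<Sum>l\<in>{l\<in>I. P l}. \<Sum>l'\<in>{l\<in>I. P l}. f l l') = (\<Sum>l\<in>I. \<Sum>l'\<in>I. if P l \<and> P l' then f l l' else (0::real))"
proof -
  have "(\<Sum>l\<in>{l\<in>I. P l}. \<Sum>l'\<in>{l\<in>I. P l}. f l l') = (\<Sum>l\<in>I. if P l then (\<Sum>l'\<in>{l\<in>I. P l}. f l l') else 0)"
    by (rule sum.inter_filter[OF assms])
  also have "\<dots> = (\<Sum>l\<in>I. if P l then (\<Sum>l'\<in>I. if P l' then f l l' else 0) else 0)"
    by (rule sum.cong[OF refl], rule if_cong[OF refl _ refl], rule sum.inter_filter[OF assms])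
  also have "\<dots> = (\<Sum>l\<in>I. \<Sum>l'\<in>I. if P l \<and> P l' then f l l' else 0)"
    by (rule sum.cong) auto
  finally show ?thesis .
qed

lemma eig_core:
  fixes a b :: "nat \<Rightarrow> nat \<Rightarrow> real" and lam :: "nat \<Rightarrow> ereal" and c :: "nat \<Rightarrow> real"
  assumes fin: "finite I"
    and sym: "\<forall>l\<in>I. \<forall>l'\<in>I. a l l' = a l' l \<and> b l l' = b l' l"
    and psdA: "\<And>e. 0 \<le> (\<Sum>l\<in>I. \<Sum>l'\<in>I. e l * e l' * a l l')"
    and psdB: "\<And>e. 0 \<le> (\<Sum>l\<in>I. \<Sum>l'\<in>I. e l * e l' * b l l')"
    and eigF: "\<And>l r l'. l\<in>I \<Longrightarrow> l' \<in> I \<Longrightarrow> lam l = ereal r \<Longrightarrow> a l l' = r * b l l'"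
    and eigI: "\<And>l l'. l\<in>I \<Longrightarrow> l' \<in> I \<Longrightarrow> lam l = \<infinity> \<Longrightarrow> b l l' = 0"
    and notM: "\<forall>l\<in>I. lam l \<noteq> -\<infinity>"
    and pos: "0 < rs"
  shows "rs * (\<Sum>l\<in>{l\<in>I. \<not> lam l < ereal rs}. \<Sum>l'\<in>{l\<in>I. \<not> lam l < ereal rs}. c l * c l' * b l l')
         \<le> (\<Sum>l\<in>I. \<Sum>l'\<in>I. c l * c l' * a l l')"
proof -
  define cl where "cl l = (if lam l < ereal rs then 1 else if lam l = \<infinity> then 3 else (2::nat))" for l
  define eL where "eL l = (if cl l = 1 then c l else 0)" for l
  define eF where "eF l = (if cl l = 2 then c l else 0)" for l
  define eI where "eI l = (if cl l = 3 then c l else 0)" for l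
  define r where "r l = real_of_ereal (lam l)" for l
  define d where "d l = sqrt (r l - rs)" for l
  have fin_r: "lam l = ereal (r l)" if "l \<in> I" "cl l \<noteq> 3" for l
    using that notM unfolding cl_def r_def by (cases "lam l") auto
  have cl2: "rs \<le> r l" if "l \<in> I" "cl l = 2" for l
    using that fin_r[OF that(1)] unfolding cl_def by (auto split: if_splits)
  have cl1: "r l < rs" if "l \<in> I" "cl l = 1" for l
    using that fin_r[OF that(1)] unfolding cl_def by (auto split: if_splits)
  have cls: "cl l = 1 \<or> cl l = 2 \<or> cl l = 3" for l unfolding cl_def by auto
  have bI: "b l l' = 0" if "l \<in> I" "l' \<in> I" "cl l = 3 \<or> cl l' = 3" for l l'
  proof -
    have i: "lam x = \<infinity>" if "cl x = 3" for x using that unfolding cl_def by (auto split: if_splits)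
    show ?thesis using that i eigI sym by metis
  qed
  have aI: "a l l' = 0" if "l \<in> I" "l' \<in> I" "cl l \<noteq> cl l'" "cl l = 3 \<or> cl l' = 3" for l l'
  proof -
    have s: "a l l' = a l' l" using sym that by auto
    have b1: "b l l' = 0" "b l' l = 0" using bI that by auto
    show ?thesis
    proof (cases "cl l = 3")
      case True
      then have "cl l' \<noteq> 3" using that by auto
      then show ?thesis using s b1 eigF[OF that(2,1) fin_r[OF that(2)]] by simp
    next
      case False
      then show ?thesis using s b1 eigF[OF that(1,2) fin_r[OF that(1)]] by simp
    qed
  qed
  have aLF: "a l l' = 0 \<and> b l l' = 0" if "l \<in> I" "l' \<in> I" "cl l = 1" "cl l' = 2" for l l'
  proof -
    have e1: "a l l' = r l * b l l'" using eigF[OF that(1,2) fin_r[OF that(1)]] that by simp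
    have e2: "a l' l = r l' * b l' l" using eigF[OF that(2,1) fin_r[OF that(2)]] that by simp
    have "r l \<noteq> r l'" using cl1[OF that(1,3)] cl2[OF that(2,4)] by simp
    then have "b l l' = 0" using e1 e2 sym that by (metis mult.commute mult_right_cancel)
    then show ?thesis using e1 by simp
  qed
  have aFF: "a l l' - rs * b l l' = d l * d l' * b l l'" if "l \<in> I" "l' \<in> I" "cl l = 2" "cl l' = 2" for l l'
  proof -
    have e1: "a l l' = r l * b l l'" using eigF[OF that(1,2) fin_r[OF that(1)]] that by simp
    have e2: "a l' l = r l' * b l' l" using eigF[OF that(2,1) fin_r[OF that(2)]] that by simp
    show ?thesis
    proof (cases "r l = r l'")
      case True
      have dd: "d l * d l' = r l - rs" unfolding d_def using True cl2[OF that(1,3)]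
        by (metis abs_of_nonneg diff_ge_0_iff_ge real_sqrt_abs2 real_sqrt_mult) 
      have "a l l' - rs * b l l' = (r l - rs) * b l l'" using e1 by (simp add: algebra_simps)
      then show ?thesis using dd by simp
    next
      case False
      then have "b l l' = 0" using e1 e2 sym that by (metis mult.commute mult_right_cancel)
      then show ?thesis using e1 by simp
    qed
  qed
  have pw: "c l * c l' * a l l' = eL l * eL l' * a l l' + eI l * eI l' * a l l'
      + (rs * (eF l * eF l' * b l l') + (eF l * d l) * (eF l' * d l') * b l l')"
    if "l \<in> I" "l' \<in> I" for l l'
  proof -
    consider "cl l = 1" | "cl l = 2" | "cl l = 3" using cls by blast
    then show ?thesis
    proof cases
      case 1
      then show ?thesis using cls[of l'] aLF[OF that] aI[OF that] unfolding eL_def eF_def eI_def by auto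
    next
      case 2
      then show ?thesis using cls[of l'] aLF[OF that(2,1)] aI[OF that] aFF[OF that] sym that
        unfolding eL_def eF_def eI_def by (auto simp: algebra_simps)
    next
      case 3
      then show ?thesis using cls[of l'] aI[OF that] unfolding eL_def eF_def eI_def by auto
    qed
  qed
  have pwH: "(if \<not> lam l < ereal rs \<and> \<not> lam l' < ereal rs then c l * c l' * b l l' else 0)
     = eF l * eF l' * b l l'" if "l \<in> I" "l' \<in> I" for l l'
    using cls[of l] cls[of l'] bI[OF that] unfolding eF_def cl_def by (auto split: if_splits)
  have "(\<Sum>l\<in>{l\<in>I. \<not> lam l < ereal rs}. \<Sum>l'\<in>{l\<in>I. \<not> lam l < ereal rs}. c l * c l' * b l l')
      = (\<Sum>l\<in>I. \<Sum>l'\<in>I. eF l * eF l' * b l l')"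
    unfolding dsum_filter[OF fin] by (intro sum.cong refl) (simp add: pwH)
  moreover have "(\<Sum>l\<in>I. \<Sum>l'\<in>I. c l * c l' * a l l') =
      (\<Sum>l\<in>I. \<Sum>l'\<in>I. eL l * eL l' * a l l') + (\<Sum>l\<in>I. \<Sum>l'\<in>I. eI l * eI l' * a l l')
      + (rs * (\<Sum>l\<in>I. \<Sum>l'\<in>I. eF l * eF l' * b l l') + (\<Sum>l\<in>I. \<Sum>l'\<in>I. (eF l * d l) * (eF l' * d l') * b l l'))"
    using pw by (simp add: sum.distrib sum_distrib_left)
  ultimately show ?thesis using psdA[of eL] psdA[of eI] psdB[of "\<lambda>l. eF l * d l"] by simp
qed



lemma add_layer_ext: "S \<subseteq> add_layer T S" unfolding add_layer_def by auto
lemma add_layer_sub: "S \<subseteq> T \<Longrightarrow> add_layer T S \<subseteq> T" unfolding add_layer_def by auto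
lemma add_layer_mono: "S \<subseteq> S' \<Longrightarrow> add_layer T S \<subseteq> add_layer T S'" unfolding add_layer_def by auto
lemma add_layer_pow_sub: "S \<subseteq> T \<Longrightarrow> (add_layer T ^^ L) S \<subseteq> T"
  by (induction L) (auto dest: add_layer_sub)
lemma add_layer_pow_ext: "S \<subseteq> (add_layer T ^^ L) S"
  by (induction L) (auto intro: add_layer_ext[THEN subsetD])
lemma add_layer_pow_1: "L \<ge> 1 \<Longrightarrow> add_layer T S \<subseteq> (add_layer T ^^ L) S"
proof (cases L)
  case (Suc L') then show ?thesis using add_layer_mono[OF add_layer_pow_ext[where S=S and T=T and L=L']] by simp
qed auto

locale geneo =
  fixes \<Omega> :: "'a::euclidean_space set"
    and T :: "'a set set"
    and A :: "'a \<Rightarrow> 'a \<Rightarrow> 'a" and amax :: real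
    and c :: "'a \<Rightarrow> real"
    and X :: "'a set" and \<phi> :: "'a \<Rightarrow> 'a \<Rightarrow> real" and Vh :: "('a \<Rightarrow> real) set"
    and N :: nat and T' :: "nat \<Rightarrow> 'a set set" and Om :: "nat \<Rightarrow> 'a set"
  assumes dom: "polyhedral_domain \<Omega> T"
    and A_lin: "\<forall>x\<in>\<Omega>. linear (A x)"
    and A_sym: "\<forall>x\<in>\<Omega>. \<forall>u w. A x u \<bullet> w = u \<bullet> A x w"
    and A_ell: "\<forall>x\<in>\<Omega>. \<forall>\<xi>. (norm \<xi>)\<^sup>2 \<le> A x \<xi> \<bullet> \<xi> \<and> A x \<xi> \<bullet> \<xi> \<le> amax * (norm \<xi>)\<^sup>2"
    and A_meas: "\<forall>u w. (\<lambda>x. A x u \<bullet> w) \<in> borel_measurable lebesgue"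
    and c_meas: "c \<in> borel_measurable lebesgue"
    and c_nonneg: "\<forall>x\<in>\<Omega>. 0 \<le> c x"
    and c_bdd: "\<exists>M. AE x in lebesgue_on \<Omega>. c x \<le> M"
    and fe: "nodal_fe_space T \<Omega> X \<phi> Vh"
    and part: "\<forall>i\<in>{1..N}. T' i \<subseteq> T \<and> T' i \<noteq> {}"
    and part_cover: "(\<Union>i\<in>{1..N}. T' i) = T"
    and overlap: "\<forall>i\<in>{1..N}. \<exists>L\<ge>1. Om i = interior (\<Union>((add_layer T ^^ L) (T' i)))"
begin

definition Lay where
  "Lay i = (add_layer T ^^ (SOME L. L \<ge> 1 \<and> Om i = interior (\<Union>((add_layer T ^^ L) (T' i))))) (T' i)"

lemma Lay: assumes "i \<in> {1..N}"
  shows "Om i = interior (\<Union>(Lay i))" "Lay i \<subseteq> T" "add_layer T (T' i) \<subseteq> Lay i"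
proof -
  define L where "L = (SOME L. L \<ge> 1 \<and> Om i = interior (\<Union>((add_layer T ^^ L) (T' i))))"
  have L: "L \<ge> 1 \<and> Om i = interior (\<Union>((add_layer T ^^ L) (T' i)))"
    unfolding L_def by (rule someI_ex) (use overlap assms in auto)
  have LI: "Lay i = (add_layer T ^^ L) (T' i)" unfolding Lay_def L_def ..
  show "Om i = interior (\<Union>(Lay i))" using L LI by simp
  show "Lay i \<subseteq> T" unfolding LI by (rule add_layer_pow_sub) (use part assms in auto)
  show "add_layer T (T' i) \<subseteq> Lay i" unfolding LI by (rule add_layer_pow_1) (use L in auto)
qed

lemma tri: "triangulation T" and Om_eq: "\<Omega> = interior (\<Union>T)" and clOm: "closure \<Omega> = \<Union>T"
  and simpT: "\<And>\<tau>. \<tau> \<in> T \<Longrightarrow> int DIM('a) simplex \<tau>" and OmO: "open \<Omega>" and bddO: "bounded \<Omega>"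
  using dom unfolding polyhedral_domain_def mesh_of_def by auto

lemma finT: "finite T" using tri unfolding triangulation_def by auto

lemma face: "\<tau> \<in> T \<Longrightarrow> \<sigma> \<in> T \<Longrightarrow> (\<tau> \<inter> \<sigma>) face_of \<tau>"
  using tri unfolding triangulation_def by auto

lemma simp_props: assumes "\<tau> \<in> T"
  shows "convex \<tau>" "compact \<tau>" "interior \<tau> \<noteq> {}" "closure (interior \<tau>) = \<tau>"
proof -
  obtain C where C: "\<not> affine_dependent C" "int (card C) = int DIM('a) + 1" "\<tau> = convex hull C"
    using simpT[OF assms] unfolding simplex_def by auto
  have fC: "finite C" using C(1) aff_independent_finite by blast
  show cv: "convex \<tau>" using C by simp
  show cp: "compact \<tau>" using C fC by (simp add: compact_convex_hull finite_imp_compact)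
  have "card C = Suc DIM('a)" using C(2) by simp
  then show ne: "interior \<tau> \<noteq> {}" using C interior_convex_hull_eq_empty by metis
  show "closure (interior \<tau>) = \<tau>"
    using convex_closure_interior[OF cv ne] cp by (simp add: compact_imp_closed closure_closed)
qed

lemma O_sub: "\<Omega> \<subseteq> \<Union>T" using clOm closure_subset by blast

lemma int_sub_O: "\<tau> \<in> T \<Longrightarrow> interior \<tau> \<subseteq> \<Omega>"
  using Om_eq by (simp add: Sup_upper interior_mono)

lemma int_disj: assumes "\<tau> \<in> T" "\<sigma> \<in> T" "\<tau> \<noteq> \<sigma>" shows "interior \<tau> \<inter> \<sigma> = {}"
proof (rule ccontr)
  assume "interior \<tau> \<inter> \<sigma> \<noteq> {}"
  then obtain x where x: "x \<in> interior \<tau>" "x \<in> \<sigma>" by auto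
  have ri: "rel_interior \<tau> = interior \<tau>" "rel_interior \<sigma> = interior \<sigma>"
    using rel_interior_nonempty_interior simp_props assms by auto
  have "\<tau> \<inter> \<sigma> = \<tau>"
  proof (rule ccontr)
    assume "\<tau> \<inter> \<sigma> \<noteq> \<tau>"
    then have "(\<tau> \<inter> \<sigma>) \<inter> rel_interior \<tau> = {}" using face_of_disjoint_rel_interior face assms by blast
    then show False using x ri interior_subset by blast
  qed
  then have sub: "\<tau> \<subseteq> \<sigma>" by auto
  have "(\<sigma> \<inter> \<tau>) face_of \<sigma>" using face assms by blast
  moreover have "\<sigma> \<inter> \<tau> = \<tau>" using sub by auto
  ultimately have "\<tau> \<inter> rel_interior \<sigma> = {}" using face_of_disjoint_rel_interior assms by metis
  moreover have "interior \<tau> \<subseteq> interior \<sigma>" using sub interior_mono by blast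
  ultimately show False using x ri interior_subset by blast
qed

lemma closed_UT: "closed (\<Union>S)" if "S \<subseteq> T" for S
  using that finT simp_props by (meson closed_Union compact_imp_closed finite_subset subsetD)

lemma clOmi: assumes "i \<in> {1..N}" shows "closure (Om i) \<subseteq> \<Union>(Lay i)"
  using Lay[OF assms] closed_UT[of "Lay i"] by (simp add: closure_minimal interior_subset)

lemma Lay_cl: assumes "i \<in> {1..N}" "\<tau> \<in> Lay i" shows "\<tau> \<subseteq> closure (Om i)"
proof -
  have "interior \<tau> \<subseteq> Om i" using Lay[OF assms(1)] assms(2) by (simp add: Sup_upper interior_mono)
  then have "closure (interior \<tau>) \<subseteq> closure (Om i)" by (rule closure_mono)
  moreover have "\<tau> \<in> T" using Lay[OF assms(1)] assms(2) by auto
  ultimately show ?thesis using simp_props(4) Lay[OF assms(1)] by metis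
qed

lemma Om_sub: assumes "i \<in> {1..N}" shows "Om i \<subseteq> \<Omega>" "open (Om i)"
proof -
  have "\<Union>(Lay i) \<subseteq> \<Union>T" using Lay[OF assms] by auto
  then show "Om i \<subseteq> \<Omega>" using Lay[OF assms] Om_eq interior_mono by metis
  show "open (Om i)" using Lay[OF assms] by simp
qed

lemma int_Om: assumes "i \<in> {1..N}" "\<tau> \<in> T" "x \<in> interior \<tau>"
  shows "x \<in> closure (Om i) \<longleftrightarrow> \<tau> \<in> Lay i" "x \<in> Om i \<longleftrightarrow> \<tau> \<in> Lay i"
proof -
  have 1: "\<tau> \<in> Lay i" if xc: "x \<in> closure (Om i)"
  proof -
    obtain \<sigma> where "\<sigma> \<in> Lay i" "x \<in> \<sigma>" using clOmi[OF assms(1)] xc by auto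
    then show ?thesis using int_disj[OF assms(2), of \<sigma>] Lay[OF assms(1)] assms(3) by auto
  qed
  have 2: "x \<in> Om i" if "\<tau> \<in> Lay i"
    using Lay[OF assms(1)] that assms(3) interior_mono[of \<tau> "\<Union>(Lay i)"] by auto
  show "x \<in> closure (Om i) \<longleftrightarrow> \<tau> \<in> Lay i" using 1 2 closure_subset by blast
  show "x \<in> Om i \<longleftrightarrow> \<tau> \<in> Lay i" using 1 2 closure_subset by blast
qed

lemma node_Lay: assumes "i \<in> {1..N}" "k \<in> Om i" "\<tau> \<in> T" "k \<in> \<tau>" shows "\<tau> \<in> Lay i"
proof -
  have "k \<in> closure (interior \<tau>)" using simp_props assms by auto
  then have "Om i \<inter> closure (interior \<tau>) \<noteq> {}" using assms by auto
  then have "Om i \<inter> interior \<tau> \<noteq> {}" using open_Int_closure_eq_empty Om_sub[OF assms(1)] by blast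
  then obtain y where "y \<in> Om i" "y \<in> interior \<tau>" by auto
  then show ?thesis using int_Om[OF assms(1,3)] by auto
qed

lemma node_some: assumes "k \<in> \<Omega>" shows "\<exists>i\<in>{1..N}. k \<in> Om i"
proof -
  obtain \<tau>0 where t0: "\<tau>0 \<in> T" "k \<in> \<tau>0" using O_sub assms by auto
  then obtain i where i: "i \<in> {1..N}" "\<tau>0 \<in> T' i" using part_cover by auto
  define K where "K = \<Union>{\<sigma>\<in>T. k \<notin> \<sigma>}"
  have "closed K" unfolding K_def by (rule closed_UT) auto
  then have oU: "open (\<Omega> - K)" using OmO by auto
  have kU: "k \<in> \<Omega> - K" using assms unfolding K_def by auto
  have "\<Omega> - K \<subseteq> \<Union>(Lay i)"
  proof
    fix y assume y: "y \<in> \<Omega> - K"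
    then obtain \<sigma> where s: "\<sigma> \<in> T" "y \<in> \<sigma>" using O_sub by auto
    then have "k \<in> \<sigma>" using y unfolding K_def by auto
    then have "\<sigma> \<in> add_layer T (T' i)" unfolding add_layer_def using s t0 i by auto
    then show "y \<in> \<Union>(Lay i)" using Lay[OF i(1)] s by auto
  qed
  then have "k \<in> interior (\<Union>(Lay i))" using oU kU interior_maximal by blast
  then show ?thesis using Lay[OF i(1)] i by auto
qed

lemma fe_parts: "finite X" "X \<subseteq> \<Omega>" "Vh = fspan (\<phi> ` X)"
  "\<And>k l. k \<in> X \<Longrightarrow> l \<in> X \<Longrightarrow> \<phi> k l = (if k = l then 1 else 0)"
  "\<And>k \<tau> x. k \<in> X \<Longrightarrow> \<tau> \<in> T \<Longrightarrow> k \<notin> \<tau> \<Longrightarrow> x \<in> \<tau> \<Longrightarrow> \<phi> k x = 0"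
  "\<And>v. v \<in> Vh \<Longrightarrow> continuous_on UNIV v"
  "\<And>v x. v \<in> Vh \<Longrightarrow> x \<notin> \<Omega> \<Longrightarrow> v x = 0"
  "\<And>v \<tau>. v \<in> Vh \<Longrightarrow> \<tau> \<in> T \<Longrightarrow> \<exists>q. polynomial_function q \<and> (\<forall>x\<in>\<tau>. v x = q x)"
  using fe unfolding nodal_fe_space_def by auto

lemma phi_in: "k \<in> X \<Longrightarrow> \<phi> k \<in> Vh"
  using fe_parts(3) module.span_base[OF module_fscale, of "\<phi> k" "\<phi> ` X"] by auto


lemma lin_grad: fixes f :: "'b::euclidean_space \<Rightarrow> real"
  assumes "bounded_linear f" shows "f = (\<lambda>h. h \<bullet> (\<Sum>i\<in>Basis. f i *\<^sub>R i))"
proof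
  fix h :: 'b
  interpret bounded_linear f by fact
  have "f h = f (\<Sum>i\<in>Basis. (h \<bullet> i) *\<^sub>R i)" by (simp add: euclidean_representation)
  also have "\<dots> = (\<Sum>i\<in>Basis. (h \<bullet> i) * f i)" by (simp add: sum scale)
  also have "\<dots> = h \<bullet> (\<Sum>i\<in>Basis. f i *\<^sub>R i)" by (simp add: inner_sum_right mult.commute)
  finally show "f h = h \<bullet> (\<Sum>i\<in>Basis. f i *\<^sub>R i)" .
qed

lemma poly_grad:
  fixes q :: "'b::euclidean_space \<Rightarrow> real"
  assumes "real_polynomial_function q"
  shows "\<exists>D. continuous_on UNIV D \<and> (\<forall>x. GDERIV q x :> D x)"
  using assms
proof induction
  case (linear f)
  have "GDERIV f x :> (\<Sum>i\<in>Basis. f i *\<^sub>R i)" for x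
    unfolding gderiv_def using lin_grad[OF linear] bounded_linear_imp_has_derivative[OF linear] by metis
  then show ?case by (intro exI[of _ "\<lambda>x. \<Sum>i\<in>Basis. f i *\<^sub>R i"]) auto
next
  case (const c)
  then show ?case using GDERIV_const by (intro exI[of _ "\<lambda>x. 0"]) auto
next
  case (add f g)
  then obtain D1 D2 where "continuous_on UNIV D1" "\<forall>x. GDERIV f x :> D1 x"
    "continuous_on UNIV D2" "\<forall>x. GDERIV g x :> D2 x" by blast
  then show ?case by (intro exI[of _ "\<lambda>x. D1 x + D2 x"]) (auto intro: GDERIV_add continuous_intros)
next
  case (mult f g)
  then obtain D1 D2 where d: "continuous_on UNIV D1" "\<forall>x. GDERIV f x :> D1 x"
    "continuous_on UNIV D2" "\<forall>x. GDERIV g x :> D2 x" by blast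
  have cf: "continuous_on UNIV f" "continuous_on UNIV g"
    using mult continuous_on_polymonial_function real_polynomial_function_eq by blast+
  show ?case using d cf
    by (intro exI[of _ "\<lambda>x. f x *\<^sub>R D2 x + g x *\<^sub>R D1 x"]) (auto intro: GDERIV_mult continuous_intros)
qed

lemma gderiv_unique: "GDERIV u x :> g \<Longrightarrow> GDERIV u x :> g' \<Longrightarrow> g = g'"
  unfolding gderiv_def
proof -
  assume "(u has_derivative (\<lambda>h. h \<bullet> g)) (at x)" "(u has_derivative (\<lambda>h. h \<bullet> g')) (at x)"
  then have "(\<lambda>h. h \<bullet> g) = (\<lambda>h. h \<bullet> g')" by (rule has_derivative_unique)
  then have "(g - g') \<bullet> g = (g - g') \<bullet> g'" by metis
  then have "(g - g') \<bullet> (g - g') = 0" by (simp add: inner_diff_right)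
  then show "g = g'" by simp
qed

lemma grad_eq: "GDERIV u x :> g \<Longrightarrow> grad u x = g"
  unfolding grad_def by (metis someI gderiv_unique)

lemma grad_local: assumes "open U" "x \<in> U" "\<And>y. y \<in> U \<Longrightarrow> u y = v y"
  shows "grad u x = grad v x"
proof -
  have "GDERIV u x :> g \<longleftrightarrow> GDERIV v x :> g" for g
    unfolding gderiv_def using has_derivative_transform_within_open[OF _ assms(1,2), of u _ UNIV v]
      has_derivative_transform_within_open[OF _ assms(1,2), of v _ UNIV u] assms(3)
    by (metis at_within_open[OF assms(2,1)])
  then have "gderiv u x = gderiv v x" by (intro ext)
  then show ?thesis unfolding grad_def by simp
qed

lemma gderiv_local: assumes "open U" "x \<in> U" "\<And>y. y \<in> U \<Longrightarrow> u y = v y" "GDERIV v x :> g"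
  shows "GDERIV u x :> g"
  using assms unfolding gderiv_def
  by (metis at_within_open has_derivative_transform_within_open)

lemma grad_zero: assumes "open U" "x \<in> U" "\<And>y. y \<in> U \<Longrightarrow> u y = 0"
  shows "grad u x = 0"
  using grad_local[OF assms] grad_eq[OF GDERIV_const] by simp

lemma gderiv_sum: assumes "finite I" "\<And>i. i \<in> I \<Longrightarrow> GDERIV (f i) x :> D i"
  shows "GDERIV (\<lambda>y. \<Sum>i\<in>I. f i y) x :> (\<Sum>i\<in>I. D i)"
  using assms by (induction I rule: finite_induct) (auto intro: GDERIV_add GDERIV_const)

lemma gderiv_cmult: "GDERIV u x :> g \<Longrightarrow> GDERIV (\<lambda>y. r * u y) x :> r *\<^sub>R g"
  using GDERIV_mult[OF GDERIV_const, of u x g r] by simp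

definition G :: "('a \<Rightarrow> real) set" where "G = {u. \<forall>\<tau>\<in>T. \<exists>q. polynomial_function q \<and> (\<forall>x\<in>interior \<tau>. u x = q x)}"

lemma G_lin: assumes "finite I" "\<And>i. i \<in> I \<Longrightarrow> u i \<in> G"
  shows "(\<lambda>x. \<Sum>i\<in>I. r i * u i x) \<in> G"
  unfolding G_def mem_Collect_eq
proof (intro ballI)
  fix \<tau> assume t: "\<tau> \<in> T"
  have "\<forall>i\<in>I. \<exists>q. polynomial_function q \<and> (\<forall>x\<in>interior \<tau>. u i x = q x)"
    using assms(2) t unfolding G_def by auto
  then obtain q where q: "\<And>i. i \<in> I \<Longrightarrow> polynomial_function (q i) \<and> (\<forall>x\<in>interior \<tau>. u i x = q i x)"
    by metis
  show "\<exists>q. polynomial_function q \<and> (\<forall>x\<in>interior \<tau>. (\<Sum>i\<in>I. r i * u i x) = q x)"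
  proof (intro exI[of _ "\<lambda>x. \<Sum>i\<in>I. r i * q i x"] conjI ballI)
    have "polynomial_function (\<lambda>x. r i * q i x)" if "i \<in> I" for i
      using polynomial_function_cmul[of "q i" "r i"] q[OF that] by simp
    then show "polynomial_function (\<lambda>x. \<Sum>i\<in>I. r i * q i x)"
      using assms(1) by (intro polynomial_function_sum) auto
    show "(\<Sum>i\<in>I. r i * u i x) = (\<Sum>i\<in>I. r i * q i x)" if "x \<in> interior \<tau>" for x
      using q that by (intro sum.cong) auto
  qed
qed

lemma G_add: "u \<in> G \<Longrightarrow> v \<in> G \<Longrightarrow> (\<lambda>x. u x + v x) \<in> G"
  using G_lin[of "{0::nat,1}" "\<lambda>i. if i = 0 then u else v" "\<lambda>_. 1"] by simp

lemma G_scale: "u \<in> G \<Longrightarrow> (\<lambda>x. r * u x) \<in> G"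
  using G_lin[of "{0::nat}" "\<lambda>i. u" "\<lambda>_. r"] by simp

lemma G_diff: "u \<in> G \<Longrightarrow> v \<in> G \<Longrightarrow> (\<lambda>x. u x - v x) \<in> G"
  using G_add[of u "\<lambda>x. (-1) * v x"] G_scale[of v "-1"] by simp

lemma G_gderiv: assumes "u \<in> G" "\<tau> \<in> T"
  shows "\<exists>q D. polynomial_function q \<and> continuous_on UNIV D \<and>
     (\<forall>x\<in>interior \<tau>. u x = q x \<and> GDERIV u x :> D x \<and> grad u x = D x)"
proof -
  obtain q where q: "polynomial_function q" "\<forall>x\<in>interior \<tau>. u x = q x"
    using assms unfolding G_def by auto
  obtain D where D: "continuous_on UNIV D" "\<forall>x. GDERIV q x :> D x"
    using poly_grad q(1) real_polynomial_function_eq by blast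
  have "GDERIV u x :> D x" if "x \<in> interior \<tau>" for x
    using gderiv_local[of "interior \<tau>" x u q] q D that by auto
  then show ?thesis using q D grad_eq by blast
qed

lemma G_has_grad: "u \<in> G \<Longrightarrow> \<tau> \<in> T \<Longrightarrow> x \<in> interior \<tau> \<Longrightarrow> GDERIV u x :> grad u x"
  using G_gderiv by metis

lemma G_grad_lin: assumes "finite I" "\<And>i. i \<in> I \<Longrightarrow> u i \<in> G" "\<tau> \<in> T" "x \<in> interior \<tau>"
  shows "grad (\<lambda>y. \<Sum>i\<in>I. r i * u i y) x = (\<Sum>i\<in>I. r i *\<^sub>R grad (u i) x)"
  by (rule grad_eq, rule gderiv_sum[OF assms(1)], rule gderiv_cmult, rule G_has_grad) (use assms in auto)

lemma G_grad_add: assumes "u \<in> G" "v \<in> G" "\<tau> \<in> T" "x \<in> interior \<tau>"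
  shows "grad (\<lambda>y. u y + v y) x = grad u x + grad v x"
  by (rule grad_eq, rule GDERIV_add) (use G_has_grad assms in auto)

lemma G_grad_scale: assumes "u \<in> G" "\<tau> \<in> T" "x \<in> interior \<tau>"
  shows "grad (\<lambda>y. r * u y) x = r *\<^sub>R grad u x"
  by (rule grad_eq, rule gderiv_cmult) (use G_has_grad assms in auto)

lemma Vh_G: "Vh \<subseteq> G"
  unfolding G_def using fe_parts(8) interior_subset by fastforce

lemma restr_G: assumes "u \<in> G" "i \<in> {1..N}" shows "restr (closure (Om i)) u \<in> G"
  unfolding G_def mem_Collect_eq
proof (intro ballI)
  fix \<tau> assume t: "\<tau> \<in> T"
  obtain q where q: "polynomial_function q" "\<forall>x\<in>interior \<tau>. u x = q x"
    using assms t unfolding G_def by auto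
  show "\<exists>q. polynomial_function q \<and> (\<forall>x\<in>interior \<tau>. restr (closure (Om i)) u x = q x)"
  proof (cases "\<tau> \<in> Lay i")
    case True
    then show ?thesis using q int_Om[OF assms(2) t] unfolding restr_def by (intro exI[of _ q]) auto
  next
    case False
    then show ?thesis using q int_Om[OF assms(2) t] unfolding restr_def by (intro exI[of _ "\<lambda>x. 0"]) auto
  qed
qed


lemma borel_leb: "f \<in> borel_measurable borel \<Longrightarrow> f \<in> borel_measurable lebesgue"
  by (metis measurable_completion measurable_lborel2)

lemma open_leb: "open S \<Longrightarrow> S \<in> sets lebesgue"
  by (metis borel_open sets_completionI_sets sets_lborel)

lemma Onempty: "\<Omega> \<noteq> {}" using dom unfolding polyhedral_domain_def by auto

lemma amax_nonneg: "0 \<le> amax"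
proof -
  obtain x where x: "x \<in> \<Omega>" using Onempty by auto
  obtain b :: 'a where b: "b \<in> Basis" using nonempty_Basis by blast
  then have "norm b = 1" by simp
  then show ?thesis using A_ell x by (metis order_trans power_one mult.right_neutral zero_le_one)
qed

lemma A_add: "x \<in> \<Omega> \<Longrightarrow> A x (g + h) = A x g + A x h"
  using A_lin linear_add by blast
lemma A_diff: "x \<in> \<Omega> \<Longrightarrow> A x (g - h) = A x g - A x h"
  using A_lin linear_diff by blast
lemma A_cmul: "x \<in> \<Omega> \<Longrightarrow> A x (r *\<^sub>R g) = r *\<^sub>R A x g"
  using A_lin linear_cmul by blast
lemma A_0: "x \<in> \<Omega> \<Longrightarrow> A x 0 = 0"
  using A_lin linear_0 by blast
lemma A_sum: "x \<in> \<Omega> \<Longrightarrow> A x (sum f I) = (\<Sum>i\<in>I. A x (f i))"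
  using A_lin real_vector.linear_sum by blast
lemma A_symm: "x \<in> \<Omega> \<Longrightarrow> A x g \<bullet> h = A x h \<bullet> g"
  using A_sym by (metis inner_commute)
lemma A_psd: "x \<in> \<Omega> \<Longrightarrow> 0 \<le> A x g \<bullet> g"
  using A_ell by (meson order_trans zero_le_power2)

lemma A_2: assumes "x \<in> \<Omega>" shows "2 * (A x g \<bullet> h) \<le> A x g \<bullet> g + A x h \<bullet> h"
proof -
  have "0 \<le> A x (g - h) \<bullet> (g - h)" using A_psd assms by blast
  also have "\<dots> = A x g \<bullet> g + A x h \<bullet> h - A x g \<bullet> h - A x h \<bullet> g"
    using A_diff[OF assms] by (simp add: inner_diff_left inner_diff_right)
  finally show ?thesis using A_symm[OF assms, of h g] by simp
qed

lemma A_bound: assumes "x \<in> \<Omega>" shows "\<bar>A x g \<bullet> h\<bar> \<le> amax * (norm g + norm h)^2"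
proof -
  define P where "P = A x (g + h) \<bullet> (g + h)"
  define M where "M = A x (g - h) \<bullet> (g - h)"
  have P: "P = A x g \<bullet> g + 2 * (A x g \<bullet> h) + A x h \<bullet> h"
    unfolding P_def using A_add[OF assms] A_symm[OF assms, of h g] by (simp add: inner_add_left inner_add_right)
  have M: "M = A x g \<bullet> g - 2 * (A x g \<bullet> h) + A x h \<bullet> h"
    unfolding M_def using A_diff[OF assms] A_symm[OF assms, of h g] by (simp add: inner_diff_left inner_diff_right)
  have "(norm (g + h))^2 \<le> (norm g + norm h)^2"
    by (simp add: norm_triangle_ineq power_mono)
  moreover have "(norm (g - h))^2 \<le> (norm g + norm h)^2"
    by (simp add: norm_triangle_ineq4 power_mono)
  ultimately have b: "0 \<le> P" "P \<le> amax * (norm g + norm h)^2" "0 \<le> M" "M \<le> amax * (norm g + norm h)^2"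
    using A_ell assms amax_nonneg unfolding P_def M_def
    by (meson A_psd mult_left_mono order_trans)+
  have "4 * (A x g \<bullet> h) = P - M" using P M by simp
  then show ?thesis using b amax_nonneg by (smt (verit) zero_le_mult_iff zero_le_power2)
qed

lemma A_expand: assumes "x \<in> \<Omega>"
  shows "A x g \<bullet> h = (\<Sum>i\<in>Basis. \<Sum>j\<in>Basis. (g \<bullet> i) * (h \<bullet> j) * (A x i \<bullet> j))"
proof -
  have "A x g = (\<Sum>i\<in>Basis. (g \<bullet> i) *\<^sub>R A x i)"
    using A_sum[OF assms, of "\<lambda>i. (g \<bullet> i) *\<^sub>R i" Basis] A_cmul[OF assms] by (simp add: euclidean_representation)
  then have "A x g \<bullet> h = (\<Sum>i\<in>Basis. (g \<bullet> i) * (A x i \<bullet> h))" by (simp add: inner_sum_left)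
  also have "\<dots> = (\<Sum>i\<in>Basis. (g \<bullet> i) * (\<Sum>j\<in>Basis. (h \<bullet> j) * (A x i \<bullet> j)))"
  proof (rule sum.cong[OF refl])
    fix i
    have "A x i \<bullet> h = A x i \<bullet> (\<Sum>j\<in>Basis. (h \<bullet> j) *\<^sub>R j)" by (simp add: euclidean_representation)
    then show "(g \<bullet> i) * (A x i \<bullet> h) = (g \<bullet> i) * (\<Sum>j\<in>Basis. (h \<bullet> j) * (A x i \<bullet> j))"
      by (simp add: inner_sum_right)
  qed
  also have "\<dots> = (\<Sum>i\<in>Basis. \<Sum>j\<in>Basis. (g \<bullet> i) * (h \<bullet> j) * (A x i \<bullet> j))"
    by (simp add: sum_distrib_left mult.assoc)
  finally show ?thesis .
qed

definition fi :: "('a \<Rightarrow> real) \<Rightarrow> ('a \<Rightarrow> real) \<Rightarrow> 'a \<Rightarrow> real" where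
  "fi u v x = A x (grad u x) \<bullet> grad v x + c x * u x * v x"

lemma aform_fi: "aform A c S u v = integral\<^sup>L (lebesgue_on S) (fi u v)"
  by (simp add: aform_def fi_def[abs_def])

lemma aform_ind: "S \<in> sets lebesgue \<Longrightarrow> aform A c S u v = (LINT x|lebesgue. indicator S x * fi u v x)"
  by (simp add: aform_fi integral_restrict_space)

lemma negN0: "(\<Union>\<tau>\<in>T. frontier \<tau>) \<in> null_sets lebesgue"
  unfolding negligible_iff_null_sets[symmetric]
  by (rule negligible_Union) (auto simp: finT intro: negligible_convex_frontier simp_props(1))

lemma ae_int: "AE x in lebesgue. x \<in> \<Omega> \<longrightarrow> (\<exists>\<tau>\<in>T. x \<in> interior \<tau>)"
  using AE_not_in[OF negN0]
proof (rule eventually_mono)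
  fix x assume x: "x \<notin> (\<Union>\<tau>\<in>T. frontier \<tau>)"
  show "x \<in> \<Omega> \<longrightarrow> (\<exists>\<tau>\<in>T. x \<in> interior \<tau>)"
  proof
    assume "x \<in> \<Omega>"
    then obtain \<tau> where t: "\<tau> \<in> T" "x \<in> \<tau>" using O_sub by auto
    then have "closure \<tau> = \<tau>" using simp_props(2) by (simp add: compact_imp_closed)
    then show "\<exists>\<tau>\<in>T. x \<in> interior \<tau>" using t x unfolding frontier_def by auto
  qed
qed

lemma c_bound: obtains M where "0 \<le> M" "AE x in lebesgue. x \<in> \<Omega> \<longrightarrow> \<bar>c x\<bar> \<le> M"
proof -
  obtain M where "AE x in lebesgue_on \<Omega>. c x \<le> M" using c_bdd by auto
  then have "AE x in lebesgue. x \<in> \<Omega> \<longrightarrow> c x \<le> M"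
    using AE_restrict_space_iff[of \<Omega> lebesgue] open_leb[OF OmO] by simp
  then have "AE x in lebesgue. x \<in> \<Omega> \<longrightarrow> \<bar>c x\<bar> \<le> max M 0"
    by (rule eventually_mono) (use c_nonneg in auto)
  then show ?thesis using that[of "max M 0"] by simp
qed

lemma int_unique: assumes "\<tau> \<in> T" "x \<in> interior \<tau>"
  shows "(\<Sum>\<sigma>\<in>T. indicator (interior \<sigma>) x * K) = (K::real)"
proof -
  have "(\<Sum>\<sigma>\<in>T. indicator (interior \<sigma>) x * K) = (\<Sum>\<sigma>\<in>T. if \<sigma> = \<tau> then K else 0)"
  proof (rule sum.cong[OF refl])
    fix \<sigma> assume s: "\<sigma> \<in> T"
    show "indicator (interior \<sigma>) x * K = (if \<sigma> = \<tau> then K else 0)"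
    proof (cases "\<sigma> = \<tau>")
      case False
      then have "x \<notin> interior \<sigma>" using int_disj[OF s assms(1)] assms(2) interior_subset by blast
      then show ?thesis using False by simp
    qed (use assms in simp)
  qed
  also have "\<dots> = K" using assms(1) finT by simp
  finally show ?thesis .
qed

lemma piece: assumes "u \<in> G" "v \<in> G" "\<tau> \<in> T"
  shows "(\<lambda>x. indicator (interior \<tau>) x * fi u v x) \<in> borel_measurable lebesgue"
    "\<exists>B. AE x in lebesgue. \<bar>indicator (interior \<tau>) x * fi u v x\<bar> \<le> B * indicator (interior \<tau>) x"
proof -
  obtain qu Du where u: "polynomial_function qu" "continuous_on UNIV Du"
     "\<forall>x\<in>interior \<tau>. u x = qu x \<and> GDERIV u x :> Du x \<and> grad u x = Du x"
    using G_gderiv[OF assms(1,3)] by blast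
  obtain qv Dv where v: "polynomial_function qv" "continuous_on UNIV Dv"
     "\<forall>x\<in>interior \<tau>. v x = qv x \<and> GDERIV v x :> Dv x \<and> grad v x = Dv x"
    using G_gderiv[OF assms(2,3)] by blast
  have cq: "continuous_on UNIV qu" "continuous_on UNIV qv"
    using u(1) v(1) continuous_on_polymonial_function by blast+
  have eq: "indicator (interior \<tau>) x * fi u v x = indicator (interior \<tau>) x *
     ((\<Sum>i\<in>Basis. \<Sum>j\<in>Basis. (Du x \<bullet> i) * (Dv x \<bullet> j) * (A x i \<bullet> j)) + c x * qu x * qv x)" for x
  proof (cases "x \<in> interior \<tau>")
    case True
    then have "x \<in> \<Omega>" using int_sub_O assms(3) by auto
    then show ?thesis using True u(3) v(3) A_expand unfolding fi_def by simp
  qed simp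
  have m1: "(\<lambda>x. Du x \<bullet> i) \<in> borel_measurable lebesgue" "(\<lambda>x. Dv x \<bullet> i) \<in> borel_measurable lebesgue" for i
    by (auto intro!: borel_leb borel_measurable_continuous_onI continuous_intros u(2) v(2))
  have m2: "qu \<in> borel_measurable lebesgue" "qv \<in> borel_measurable lebesgue"
    by (auto intro!: borel_leb borel_measurable_continuous_onI cq)
  have m3: "(\<lambda>x. A x i \<bullet> j) \<in> borel_measurable lebesgue" for i j using A_meas by auto
  have m4: "interior \<tau> \<in> sets lebesgue" by (simp add: open_leb)
  show "(\<lambda>x. indicator (interior \<tau>) x * fi u v x) \<in> borel_measurable lebesgue"
    unfolding eq using m1 m2 m3 m4 c_meas
    by (intro borel_measurable_times borel_measurable_add borel_measurable_sum borel_measurable_indicator) auto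
  have cpt: "compact \<tau>" using simp_props assms by auto
  obtain Bu where Bu: "Bu > 0" "\<forall>x\<in>\<tau>. norm (Du x) \<le> Bu"
    using compact_imp_bounded[OF compact_continuous_image[OF continuous_on_subset[OF u(2)] cpt]]
    unfolding bounded_pos by auto
  obtain Bv where Bv: "Bv > 0" "\<forall>x\<in>\<tau>. norm (Dv x) \<le> Bv"
    using compact_imp_bounded[OF compact_continuous_image[OF continuous_on_subset[OF v(2)] cpt]]
    unfolding bounded_pos by auto
  obtain Cu where Cu: "Cu > 0" "\<forall>x\<in>\<tau>. norm (qu x) \<le> Cu"
    using compact_imp_bounded[OF compact_continuous_image[OF continuous_on_subset[OF cq(1)] cpt]]
    unfolding bounded_pos by auto
  obtain Cv where Cv: "Cv > 0" "\<forall>x\<in>\<tau>. norm (qv x) \<le> Cv"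
    using compact_imp_bounded[OF compact_continuous_image[OF continuous_on_subset[OF cq(2)] cpt]]
    unfolding bounded_pos by auto
  obtain M where M: "0 \<le> M" "AE x in lebesgue. x \<in> \<Omega> \<longrightarrow> \<bar>c x\<bar> \<le> M" using c_bound by blast
  show "\<exists>B. AE x in lebesgue. \<bar>indicator (interior \<tau>) x * fi u v x\<bar> \<le> B * indicator (interior \<tau>) x"
  proof (intro exI[of _ "amax * (Bu + Bv)^2 + M * Cu * Cv"], rule eventually_mono[OF M(2)])
    fix x assume cx: "x \<in> \<Omega> \<longrightarrow> \<bar>c x\<bar> \<le> M"
    show "\<bar>indicator (interior \<tau>) x * fi u v x\<bar> \<le> (amax * (Bu + Bv)^2 + M * Cu * Cv) * indicator (interior \<tau>) x"
    proof (cases "x \<in> interior \<tau>")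
      case True
      then have xO: "x \<in> \<Omega>" and xt: "x \<in> \<tau>" using int_sub_O assms(3) interior_subset by auto
      have "\<bar>A x (Du x) \<bullet> Dv x\<bar> \<le> amax * (norm (Du x) + norm (Dv x))^2" using A_bound[OF xO] .
      also have "\<dots> \<le> amax * (Bu + Bv)^2"
        using Bu Bv xt amax_nonneg by (intro mult_left_mono power_mono add_mono) auto
      finally have 1: "\<bar>A x (Du x) \<bullet> Dv x\<bar> \<le> amax * (Bu + Bv)^2" .
      have "\<bar>c x * qu x * qv x\<bar> = \<bar>c x\<bar> * \<bar>qu x\<bar> * \<bar>qv x\<bar>" by (simp add: abs_mult)
      also have "\<dots> \<le> M * Cu * Cv" using cx xO Cu Cv xt
        by (intro mult_mono) auto
      finally have 2: "\<bar>c x * qu x * qv x\<bar> \<le> M * Cu * Cv" .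
      have "fi u v x = A x (Du x) \<bullet> Dv x + c x * qu x * qv x" using True u(3) v(3) unfolding fi_def by simp
      then show ?thesis using 1 2 True by simp
    qed simp
  qed
qed

lemma interior_lmeas: "\<tau> \<in> T \<Longrightarrow> interior \<tau> \<in> lmeasurable"
  using simp_props(2) by (meson bounded_interior compact_imp_bounded lmeasurable_open open_interior)

lemma fi_int: assumes "u \<in> G" "v \<in> G" "S \<in> sets lebesgue" "S \<subseteq> \<Omega>"
  shows "integrable lebesgue (\<lambda>x. indicator S x * fi u v x)"
proof -
  have each: "integrable lebesgue (\<lambda>x. indicator S x * (indicator (interior \<tau>) x * fi u v x))" if t: "\<tau> \<in> T" for \<tau>
  proof -
    obtain B where B: "AE x in lebesgue. \<bar>indicator (interior \<tau>) x * fi u v x\<bar> \<le> B * indicator (interior \<tau>) x"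
      using piece(2)[OF assms(1,2) t] by blast
    have ii: "integrable lebesgue (\<lambda>x. B * indicator (interior \<tau>) x)"
      using interior_lmeas[OF t] lmeasurable_iff_integrable by auto
    show ?thesis
    proof (rule Bochner_Integration.integrable_bound[OF ii])
      show "(\<lambda>x. indicator S x * (indicator (interior \<tau>) x * fi u v x)) \<in> borel_measurable lebesgue"
        using borel_measurable_times[OF borel_measurable_indicator[OF assms(3)] piece(1)[OF assms(1,2) t]] by simp
      show "AE x in lebesgue. norm (indicator S x * (indicator (interior \<tau>) x * fi u v x)) \<le> norm (B * indicator (interior \<tau>) x)"
        using B by (rule eventually_mono) (auto simp: indicator_def abs_mult split: if_splits)
    qed
  qed
  then have si: "integrable lebesgue (\<lambda>x. \<Sum>\<tau>\<in>T. indicator S x * (indicator (interior \<tau>) x * fi u v x))"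
    by (intro Bochner_Integration.integrable_sum) auto
  have ae: "AE x in lebesgue. (\<Sum>\<tau>\<in>T. indicator S x * (indicator (interior \<tau>) x * fi u v x)) = indicator S x * fi u v x"
    using ae_int
  proof (rule eventually_mono)
    fix x assume h: "x \<in> \<Omega> \<longrightarrow> (\<exists>\<tau>\<in>T. x \<in> interior \<tau>)"
    show "(\<Sum>\<tau>\<in>T. indicator S x * (indicator (interior \<tau>) x * fi u v x)) = indicator S x * fi u v x"
    proof (cases "x \<in> S")
      case True
      then obtain \<tau> where "\<tau> \<in> T" "x \<in> interior \<tau>" using h assms(4) by auto
      then show ?thesis using int_unique[of \<tau> x "fi u v x"] True by (simp add: sum_distrib_left[symmetric] mult.commute)
    qed simp
  qed
  have "(\<lambda>x. indicator S x * fi u v x) \<in> borel_measurable lebesgue"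
    by (rule borel_measurable_AE[OF _ ae]) (use si in auto)
  then show ?thesis using integrable_cong_AE_imp[OF si _ ae] by blast
qed


lemma Om_leb: "i \<in> {1..N} \<Longrightarrow> Om i \<in> sets lebesgue"
  using Om_sub open_leb by blast
lemma O_leb: "\<Omega> \<in> sets lebesgue" using OmO open_leb by blast

lemma fi_nonneg: "x \<in> \<Omega> \<Longrightarrow> 0 \<le> fi u u x"
proof -
  assume x: "x \<in> \<Omega>"
  have "0 \<le> c x * (u x * u x)" using c_nonneg x by simp
  then show ?thesis unfolding fi_def using A_psd[OF x, of "grad u x"] by (simp add: mult.assoc)
qed

lemma fi_sym: "x \<in> \<Omega> \<Longrightarrow> fi u v x = fi v u x"
  unfolding fi_def using A_symm by (simp add: mult_ac)

lemma aform_sym: assumes "S \<in> sets lebesgue" "S \<subseteq> \<Omega>" shows "aform A c S u v = aform A c S v u"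
  unfolding aform_ind[OF assms(1)]
proof (rule Bochner_Integration.integral_cong[OF refl])
  fix x show "indicator S x * fi u v x = indicator S x * fi v u x"
  proof (cases "x \<in> S")
    case True then show ?thesis using fi_sym[of x u v] assms(2) by auto
  qed simp
qed

lemma aform_psd: assumes "S \<in> sets lebesgue" "S \<subseteq> \<Omega>" shows "0 \<le> aform A c S u u"
  unfolding aform_ind[OF assms(1)]
proof (rule Bochner_Integration.integral_nonneg)
  fix x show "0 \<le> indicator S x * fi u u x"
  proof (cases "x \<in> S")
    case True then show ?thesis using fi_nonneg[of x u] assms(2) by auto
  qed simp
qed

lemma aform_local: assumes "open S" "\<And>x. x \<in> S \<Longrightarrow> u x = u' x" "\<And>x. x \<in> S \<Longrightarrow> v x = v' x"
  shows "aform A c S u v = aform A c S u' v'"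
  unfolding aform_fi
proof (rule Bochner_Integration.integral_cong[OF refl])
  fix x assume "x \<in> space (lebesgue_on S)"
  then have x: "x \<in> S" by simp
  have "grad u x = grad u' x" "grad v x = grad v' x"
    using grad_local[OF assms(1) x assms(2)] grad_local[OF assms(1) x assms(3)] by auto
  then show "fi u v x = fi u' v' x" unfolding fi_def using assms(2)[OF x] assms(3)[OF x] by simp
qed

lemma aform_lin1: assumes "finite I" "\<And>i. i \<in> I \<Longrightarrow> u i \<in> G" "v \<in> G" "S \<in> sets lebesgue" "S \<subseteq> \<Omega>"
  shows "aform A c S (\<lambda>x. \<Sum>i\<in>I. r i * u i x) v = (\<Sum>i\<in>I. r i * aform A c S (u i) v)"
proof -
  have int1: "integrable lebesgue (\<lambda>x. indicator S x * fi (\<lambda>x. \<Sum>i\<in>I. r i * u i x) v x)"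
    using fi_int[OF G_lin[of I u r, OF assms(1,2)] assms(3-5)] by blast
  have int2: "integrable lebesgue (\<lambda>x. \<Sum>i\<in>I. r i * (indicator S x * fi (u i) v x))"
    using fi_int assms by (intro Bochner_Integration.integrable_sum integrable_mult_right) auto
  have ae: "AE x in lebesgue. indicator S x * fi (\<lambda>x. \<Sum>i\<in>I. r i * u i x) v x
      = (\<Sum>i\<in>I. r i * (indicator S x * fi (u i) v x))"
    using ae_int
  proof (rule eventually_mono)
    fix x assume h: "x \<in> \<Omega> \<longrightarrow> (\<exists>\<tau>\<in>T. x \<in> interior \<tau>)"
    show "indicator S x * fi (\<lambda>x. \<Sum>i\<in>I. r i * u i x) v x = (\<Sum>i\<in>I. r i * (indicator S x * fi (u i) v x))"
    proof (cases "x \<in> S")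
      case True
      then have xO: "x \<in> \<Omega>" using assms(5) by auto
      then obtain \<tau> where t: "\<tau> \<in> T" "x \<in> interior \<tau>" using h by auto
      have g: "grad (\<lambda>x. \<Sum>i\<in>I. r i * u i x) x = (\<Sum>i\<in>I. r i *\<^sub>R grad (u i) x)"
        using G_grad_lin[OF assms(1,2) t] by simp
      have "fi (\<lambda>x. \<Sum>i\<in>I. r i * u i x) v x = (\<Sum>i\<in>I. r i * fi (u i) v x)"
        unfolding fi_def g A_sum[OF xO] A_cmul[OF xO]
        by (simp add: inner_sum_left sum_distrib_left sum_distrib_right sum.distrib algebra_simps)
      then show ?thesis using True by (simp add: sum_distrib_left)
    qed simp
  qed
  have "aform A c S (\<lambda>x. \<Sum>i\<in>I. r i * u i x) v = (LINT x|lebesgue. (\<Sum>i\<in>I. r i * (indicator S x * fi (u i) v x)))"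
    unfolding aform_ind[OF assms(4)]
    by (rule integral_cong_AE) (use int1 int2 ae in \<open>auto intro: borel_measurable_integrable\<close>)
  also have "\<dots> = (\<Sum>i\<in>I. r i * aform A c S (u i) v)"
    unfolding aform_ind[OF assms(4)]
    by (subst Bochner_Integration.integral_sum) (use fi_int assms in auto)
  finally show ?thesis .
qed

lemma aform_lin2: assumes "finite I" "\<And>i. i \<in> I \<Longrightarrow> u i \<in> G" "v \<in> G" "S \<in> sets lebesgue" "S \<subseteq> \<Omega>"
  shows "aform A c S v (\<lambda>x. \<Sum>i\<in>I. r i * u i x) = (\<Sum>i\<in>I. r i * aform A c S v (u i))"
  using aform_lin1[OF assms] aform_sym[OF assms(4,5)] by simp

lemma aform_bilin: assumes "finite I" "\<And>i. i \<in> I \<Longrightarrow> u i \<in> G" "finite K" "\<And>k. k \<in> K \<Longrightarrow> v k \<in> G"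
  "S \<in> sets lebesgue" "S \<subseteq> \<Omega>"
  shows "aform A c S (\<lambda>x. \<Sum>i\<in>I. r i * u i x) (\<lambda>x. \<Sum>k\<in>K. s k * v k x)
       = (\<Sum>i\<in>I. \<Sum>k\<in>K. r i * s k * aform A c S (u i) (v k))"
proof -
  have "aform A c S (\<lambda>x. \<Sum>i\<in>I. r i * u i x) (\<lambda>x. \<Sum>k\<in>K. s k * v k x)
      = (\<Sum>i\<in>I. r i * aform A c S (u i) (\<lambda>x. \<Sum>k\<in>K. s k * v k x))"
    by (rule aform_lin1) (use assms G_lin[of K v s] in auto)
  also have "\<dots> = (\<Sum>i\<in>I. r i * (\<Sum>k\<in>K. s k * aform A c S (u i) (v k)))"
    by (intro sum.cong refl arg_cong2[where f="(*)"] aform_lin2) (use assms in auto)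
  finally show ?thesis by (simp add: sum_distrib_left mult.assoc)
qed

lemma cs_sum: fixes B :: "'i \<Rightarrow> 'i \<Rightarrow> real"
  assumes "finite J" "\<And>j k. j \<in> J \<Longrightarrow> k \<in> J \<Longrightarrow> 2 * B j k \<le> B j j + B k k"
  shows "(\<Sum>j\<in>J. \<Sum>k\<in>J. B j k) \<le> real (card J) * (\<Sum>j\<in>J. B j j)"
proof -
  have "(\<Sum>j\<in>J. \<Sum>k\<in>J. B j k) \<le> (\<Sum>j\<in>J. \<Sum>k\<in>J. (B j j + B k k) / 2)"
  proof (intro sum_mono)
    fix j k assume "j \<in> J" "k \<in> J"
    then show "B j k \<le> (B j j + B k k) / 2" using assms(2)[of j k] by simp
  qed
  also have "\<dots> = (\<Sum>j\<in>J. real (card J) * B j j / 2 + (\<Sum>k\<in>J. B k k) / 2)"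
    by (simp add: sum.distrib add_divide_distrib sum_divide_distrib[symmetric])
  also have "\<dots> = real (card J) * (\<Sum>j\<in>J. B j j)"
    by (simp add: sum.distrib sum_divide_distrib[symmetric] sum_distrib_left)
  finally show ?thesis .
qed

lemma k0_ge: "\<tau> \<in> T \<Longrightarrow> card {j\<in>{1..N}. \<tau> \<subseteq> closure (Om j)} \<le> k0 T N Om"
  unfolding k0_def using finT by (intro Max_ge) auto

lemma card_J: assumes "\<tau> \<in> T" shows "card {j\<in>{1..N}. \<tau> \<in> Lay j} \<le> k0 T N Om"
proof -
  have "card {j\<in>{1..N}. \<tau> \<in> Lay j} \<le> card {j\<in>{1..N}. \<tau> \<subseteq> closure (Om j)}"
    using Lay_cl by (intro card_mono) auto
  then show ?thesis using k0_ge[OF assms] by linarith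
qed

lemma sum_ind: assumes "finite I"
  shows "(\<Sum>j\<in>I. indicator (S j) x * (f::real)) = real (card {j\<in>I. x \<in> S j}) * f"
proof -
  have "(\<Sum>j\<in>I. indicator (S j) x * f) = (\<Sum>j\<in>I. if x \<in> S j then f else 0)"
    by (intro sum.cong) (auto simp: indicator_def)
  also have "\<dots> = (\<Sum>j\<in>{j\<in>I. x \<in> S j}. f)" by (rule sum.inter_filter[symmetric, OF assms])
  finally show ?thesis by simp
qed

lemma loc_sum: assumes "v \<in> G"
  shows "(\<Sum>j\<in>{1..N}. aform A c (Om j) v v) \<le> real (k0 T N Om) * aform A c \<Omega> v v"
proof -
  have "(\<Sum>j\<in>{1..N}. aform A c (Om j) v v) = (LINT x|lebesgue. (\<Sum>j\<in>{1..N}. indicator (Om j) x * fi v v x))"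
    using aform_ind Om_leb fi_int[OF assms assms] Om_sub
    by (subst Bochner_Integration.integral_sum) auto
  also have "\<dots> \<le> (LINT x|lebesgue. real (k0 T N Om) * (indicator \<Omega> x * fi v v x))"
  proof (rule integral_mono_AE)
    show "integrable lebesgue (\<lambda>x. \<Sum>j\<in>{1..N}. indicator (Om j) x * fi v v x)"
      using fi_int[OF assms assms] Om_leb Om_sub by (intro Bochner_Integration.integrable_sum) auto
    show "integrable lebesgue (\<lambda>x. real (k0 T N Om) * (indicator \<Omega> x * fi v v x))"
      using fi_int[OF assms assms O_leb] by auto
    show "AE x in lebesgue. (\<Sum>j\<in>{1..N}. indicator (Om j) x * fi v v x) \<le> real (k0 T N Om) * (indicator \<Omega> x * fi v v x)"
      using ae_int
    proof (rule eventually_mono)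
      fix x assume h: "x \<in> \<Omega> \<longrightarrow> (\<exists>\<tau>\<in>T. x \<in> interior \<tau>)"
      show "(\<Sum>j\<in>{1..N}. indicator (Om j) x * fi v v x) \<le> real (k0 T N Om) * (indicator \<Omega> x * fi v v x)"
      proof (cases "x \<in> \<Omega>")
        case True
        then obtain \<tau> where t: "\<tau> \<in> T" "x \<in> interior \<tau>" using h by auto
        have "{j\<in>{1..N}. x \<in> Om j} = {j\<in>{1..N}. \<tau> \<in> Lay j}" using int_Om(2)[OF _ t] by auto
        then have "card {j\<in>{1..N}. x \<in> Om j} \<le> k0 T N Om" using card_J[OF t(1)] by simp
        then show ?thesis using True fi_nonneg[OF True, of v] sum_ind[of "{1..N}" Om x "fi v v x"]
          by (simp add: mult_right_mono)
      next
        case False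
        then have "x \<notin> Om j" if "j \<in> {1..N}" for j using Om_sub that by auto
        then show ?thesis using False by simp
      qed
    qed
  qed
  also have "\<dots> = real (k0 T N Om) * aform A c \<Omega> v v" by (simp add: aform_ind[OF O_leb])
  finally show ?thesis .
qed


lemma main_sum:
  assumes w: "\<And>j. j \<in> {1..N} \<Longrightarrow> w j \<in> G" "\<And>j x. j \<in> {1..N} \<Longrightarrow> x \<notin> closure (Om j) \<Longrightarrow> w j x = 0"
  shows "aform A c \<Omega> (\<lambda>x. \<Sum>j\<in>{1..N}. w j x) (\<lambda>x. \<Sum>j\<in>{1..N}. w j x)
     \<le> real (k0 T N Om) * (\<Sum>j\<in>{1..N}. aform A c (Om j) (w j) (w j))"
proof -
  define W where "W = (\<lambda>x. \<Sum>j\<in>{1..N}. w j x)"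
  have WG: "W \<in> G" unfolding W_def using G_lin[of "{1..N}" w "\<lambda>_. 1"] w(1) by simp
  have wi: "integrable lebesgue (\<lambda>x. indicator (Om j) x * fi (w j) (w j) x)" if "j \<in> {1..N}" for j
    using fi_int[OF w(1)[OF that] w(1)[OF that] Om_leb[OF that] Om_sub(1)[OF that]] .
  have e1: "(\<Sum>j\<in>{1..N}. aform A c (Om j) (w j) (w j))
      = (LINT x|lebesgue. (\<Sum>j\<in>{1..N}. indicator (Om j) x * fi (w j) (w j) x))"
  proof -
    have "(\<Sum>j\<in>{1..N}. aform A c (Om j) (w j) (w j)) = (\<Sum>j\<in>{1..N}. LINT x|lebesgue. indicator (Om j) x * fi (w j) (w j) x)"
      by (rule sum.cong[OF refl]) (simp add: aform_ind Om_leb)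
    also have "\<dots> = (LINT x|lebesgue. (\<Sum>j\<in>{1..N}. indicator (Om j) x * fi (w j) (w j) x))"
      by (rule Bochner_Integration.integral_sum[symmetric]) (use wi in auto)
    finally show ?thesis .
  qed
  have "real (k0 T N Om) * (\<Sum>j\<in>{1..N}. aform A c (Om j) (w j) (w j))
      = (LINT x|lebesgue. real (k0 T N Om) * (\<Sum>j\<in>{1..N}. indicator (Om j) x * fi (w j) (w j) x))"
    unfolding e1 by simp
  moreover have "aform A c \<Omega> W W \<le> (LINT x|lebesgue. real (k0 T N Om) * (\<Sum>j\<in>{1..N}. indicator (Om j) x * fi (w j) (w j) x))"
    unfolding aform_ind[OF O_leb]
  proof (rule integral_mono_AE)
    show "integrable lebesgue (\<lambda>x. indicator \<Omega> x * fi W W x)" using fi_int[OF WG WG O_leb] by simp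
    show "integrable lebesgue (\<lambda>x. real (k0 T N Om) * (\<Sum>j\<in>{1..N}. indicator (Om j) x * fi (w j) (w j) x))"
      using wi by (intro integrable_mult_right Bochner_Integration.integrable_sum) auto
    show "AE x in lebesgue. indicator \<Omega> x * fi W W x \<le> real (k0 T N Om) * (\<Sum>j\<in>{1..N}. indicator (Om j) x * fi (w j) (w j) x)"
      using ae_int
    proof (rule eventually_mono)
      fix x assume h: "x \<in> \<Omega> \<longrightarrow> (\<exists>\<tau>\<in>T. x \<in> interior \<tau>)"
      show "indicator \<Omega> x * fi W W x \<le> real (k0 T N Om) * (\<Sum>j\<in>{1..N}. indicator (Om j) x * fi (w j) (w j) x)"
      proof (cases "x \<in> \<Omega>")
        case False
        then have "x \<notin> Om j" if "j \<in> {1..N}" for j using Om_sub that by auto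
        then show ?thesis using False by simp
      next
        case xO: True
        then obtain \<tau> where t: "\<tau> \<in> T" "x \<in> interior \<tau>" using h by auto
        define J where "J = {j\<in>{1..N}. \<tau> \<in> Lay j}"
        have JS: "J \<subseteq> {1..N}" "finite J" unfolding J_def by auto
        have z: "w j y = 0" if "j \<in> {1..N} - J" "y \<in> interior \<tau>" for j y
          using w(2)[of j y] int_Om(1)[of j \<tau> y] that t unfolding J_def by auto
        have gz: "grad (w j) x = 0" if "j \<in> {1..N} - J" for j
          using grad_zero[of "interior \<tau>" x "w j"] z[OF that] t by auto
        have "grad W x = (\<Sum>j\<in>{1..N}. grad (w j) x)"
          unfolding W_def using G_grad_lin[of "{1..N}" w \<tau> x "\<lambda>_. 1"] w(1) t by simp
        also have "\<dots> = (\<Sum>j\<in>J. grad (w j) x)"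
          by (rule sum.mono_neutral_right) (use JS gz in auto)
        finally have gW: "grad W x = (\<Sum>j\<in>J. grad (w j) x)" .
        have Wx: "W x = (\<Sum>j\<in>J. w j x)" unfolding W_def
          by (rule sum.mono_neutral_right) (use JS z t in auto)
        have fa: "A x (grad W x) \<bullet> grad W x = (\<Sum>j\<in>J. A x (grad (w j) x) \<bullet> (\<Sum>k\<in>J. grad (w k) x))"
          unfolding gW A_sum[OF xO] by (simp add: inner_sum_left)
        also have "\<dots> = (\<Sum>j\<in>J. \<Sum>k\<in>J. A x (grad (w j) x) \<bullet> grad (w k) x)"
          by (simp add: inner_sum_right)
        finally have fa: "A x (grad W x) \<bullet> grad W x = (\<Sum>j\<in>J. \<Sum>k\<in>J. A x (grad (w j) x) \<bullet> grad (w k) x)" .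
        have "c x * W x * W x = (\<Sum>j\<in>J. c x * w j x) * (\<Sum>k\<in>J. w k x)"
          unfolding Wx by (simp add: sum_distrib_left)
        also have "\<dots> = (\<Sum>j\<in>J. \<Sum>k\<in>J. c x * w j x * w k x)" by (simp add: sum_product)
        finally have fc: "c x * W x * W x = (\<Sum>j\<in>J. \<Sum>k\<in>J. c x * w j x * w k x)" .
        have fW: "fi W W x = (\<Sum>j\<in>J. \<Sum>k\<in>J. A x (grad (w j) x) \<bullet> grad (w k) x)
             + (\<Sum>j\<in>J. \<Sum>k\<in>J. c x * w j x * w k x)"
          unfolding fi_def fa fc ..
        have c1: "(\<Sum>j\<in>J. \<Sum>k\<in>J. A x (grad (w j) x) \<bullet> grad (w k) x) \<le> real (card J) * (\<Sum>j\<in>J. A x (grad (w j) x) \<bullet> grad (w j) x)"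
          by (rule cs_sum[OF JS(2)]) (use A_2[OF xO] in auto)
        have c2: "(\<Sum>j\<in>J. \<Sum>k\<in>J. c x * w j x * w k x) \<le> real (card J) * (\<Sum>j\<in>J. c x * w j x * w j x)"
        proof (rule cs_sum[OF JS(2)])
          fix j k
          have "0 \<le> c x * (w j x - w k x)^2" using c_nonneg xO by simp
          then show "2 * (c x * w j x * w k x) \<le> c x * w j x * w j x + c x * w k x * w k x"
            by (simp add: power2_eq_square algebra_simps)
        qed
        have "fi W W x \<le> real (card J) * (\<Sum>j\<in>J. fi (w j) (w j) x)"
          using fW c1 c2 unfolding fi_def by (simp add: sum.distrib distrib_left mult.assoc)
        also have "\<dots> \<le> real (k0 T N Om) * (\<Sum>j\<in>J. fi (w j) (w j) x)"
          using card_J[OF t(1)] fi_nonneg[OF xO] unfolding J_def by (intro mult_right_mono sum_nonneg) auto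
        also have "(\<Sum>j\<in>J. fi (w j) (w j) x) = (\<Sum>j\<in>{1..N}. indicator (Om j) x * fi (w j) (w j) x)"
        proof -
          have "(\<Sum>j\<in>{1..N}. indicator (Om j) x * fi (w j) (w j) x) = (\<Sum>j\<in>J. indicator (Om j) x * fi (w j) (w j) x)"
            by (rule sum.mono_neutral_right) (use JS int_Om(2)[OF _ t] in \<open>auto simp: J_def\<close>)
          also have "\<dots> = (\<Sum>j\<in>J. fi (w j) (w j) x)"
            by (rule sum.cong) (use int_Om(2)[OF _ t] in \<open>auto simp: J_def\<close>)
          finally show ?thesis by simp
        qed
        finally show ?thesis using xO by simp
      qed
    qed
  qed
  ultimately have "aform A c \<Omega> W W \<le> real (k0 T N Om) * (\<Sum>j\<in>{1..N}. aform A c (Om j) (w j) (w j))"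
    by linarith
  then show ?thesis unfolding W_def .
qed

lemma phi_supp: assumes "k \<in> X" "i \<in> {1..N}" "k \<in> Om i" "x \<notin> closure (Om i)" shows "\<phi> k x = 0"
proof (cases "x \<in> \<Omega>")
  case True
  then obtain \<tau> where t: "\<tau> \<in> T" "x \<in> \<tau>" using O_sub by auto
  have "k \<notin> \<tau>"
  proof
    assume "k \<in> \<tau>"
    then have "\<tau> \<in> Lay i" using node_Lay[OF assms(2,3) t(1)] by auto
    then show False using Lay_cl[OF assms(2)] t assms(4) by auto
  qed
  then show ?thesis using fe_parts(5)[OF assms(1) t(1)] t by auto
next
  case False
  then show ?thesis using fe_parts(7)[OF phi_in[OF assms(1)]] by auto
qed

lemma Xi_eq: assumes "i \<in> {1..N}"
  shows "Xi N Om X \<phi> i w = (\<lambda>x. \<Sum>k\<in>{k\<in>X. k \<in> Om i}. (w k / real (mu N Om k)) * \<phi> k x)"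
proof -
  have "restr (closure (Om i)) (\<phi> k) = \<phi> k" if "k \<in> X" "k \<in> Om i" for k
    using phi_supp[OF that(1) assms that(2)] unfolding restr_def by auto
  then show ?thesis unfolding Xi_def by (intro ext sum.cong) auto
qed

lemma finX: "finite {k\<in>X. k \<in> Om i}" using fe_parts(1) by auto

lemma Xi_G: assumes "i \<in> {1..N}" shows "Xi N Om X \<phi> i w \<in> G"
  unfolding Xi_eq[OF assms] by (rule G_lin[OF finX]) (use phi_in Vh_G in auto)

lemma Xi_vanish: assumes "i \<in> {1..N}" "x \<notin> closure (Om i)" shows "Xi N Om X \<phi> i w x = 0"
  unfolding Xi_def restr_def using assms by simp

lemma RT_Xi: assumes "i \<in> {1..N}" shows "RT (Om i) (Xi N Om X \<phi> i w) = Xi N Om X \<phi> i w"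
  unfolding RT_def restr_def using Xi_vanish[OF assms] by auto

lemma Xi_lin: assumes "finite I"
  shows "Xi N Om X \<phi> j (\<lambda>x. \<Sum>l\<in>I. r l * f l x) = (\<lambda>x. \<Sum>l\<in>I. r l * Xi N Om X \<phi> j (f l) x)"
proof
  fix x
  define K where "K = {k\<in>X. k \<in> Om j}"
  define \<psi> where "\<psi> k = restr (closure (Om j)) (\<phi> k) x / real (mu N Om k)" for k
  have "Xi N Om X \<phi> j (\<lambda>x. \<Sum>l\<in>I. r l * f l x) x = (\<Sum>k\<in>K. \<Sum>l\<in>I. r l * f l k * \<psi> k)"
    unfolding Xi_def K_def \<psi>_def by (simp add: sum_divide_distrib sum_distrib_right)
  also have "\<dots> = (\<Sum>l\<in>I. \<Sum>k\<in>K. r l * f l k * \<psi> k)" by (rule sum.swap)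
  also have "\<dots> = (\<Sum>l\<in>I. r l * Xi N Om X \<phi> j (f l) x)"
    unfolding Xi_def K_def \<psi>_def by (simp add: sum_distrib_left mult_ac)
  finally show "Xi N Om X \<phi> j (\<lambda>x. \<Sum>l\<in>I. r l * f l x) x = (\<Sum>l\<in>I. r l * Xi N Om X \<phi> j (f l) x)" .
qed

lemma Vh_repr: assumes "v \<in> Vh" shows "v = (\<lambda>x. \<Sum>k\<in>X. v k * \<phi> k x)"
proof -
  have inj: "inj_on \<phi> X"
  proof
    fix k l assume "k \<in> X" "l \<in> X" "\<phi> k = \<phi> l"
    then show "k = l" using fe_parts(4)[of k l] fe_parts(4)[of l l] by (metis zero_neq_one)
  qed
  obtain u where u: "v = (\<Sum>w\<in>\<phi> ` X. fscale (u w) w)"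
    using assms fe_parts(3) module.span_finite[OF module_fscale, of "\<phi> ` X"] fe_parts(1) by auto
  then have u2: "v = (\<Sum>k\<in>X. fscale (u (\<phi> k)) (\<phi> k))" by (simp add: sum.reindex[OF inj])
  then have vx: "v x = (\<Sum>k\<in>X. u (\<phi> k) * \<phi> k x)" for x by (simp add: fsum_apply)
  have "v l = u (\<phi> l)" if "l \<in> X" for l
  proof -
    have "v l = (\<Sum>k\<in>X. if k = l then u (\<phi> k) else 0)"
      unfolding vx by (intro sum.cong) (use fe_parts(4) that in auto)
    then show ?thesis using that fe_parts(1) by simp
  qed
  then show ?thesis using vx by (intro ext) (simp cong: sum.cong)
qed

lemma mu_pos: assumes "k \<in> X" shows "0 < mu N Om k"
proof -
  obtain i where "i \<in> {1..N}" "k \<in> Om i" using node_some fe_parts(2) assms by blast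
  then have "{j\<in>{1..N}. k \<in> Om j} \<noteq> {}" by auto
  then show ?thesis unfolding mu_def by (simp add: card_gt_0_iff)
qed

lemma pou: assumes "v \<in> Vh"
  shows "v = (\<lambda>x. \<Sum>j\<in>{1..N}. Xi N Om X \<phi> j (restr (closure (Om j)) v) x)"
proof
  fix x
  have "(\<Sum>j\<in>{1..N}. Xi N Om X \<phi> j (restr (closure (Om j)) v) x)
      = (\<Sum>j\<in>{1..N}. \<Sum>k\<in>X. if k \<in> Om j then v k / real (mu N Om k) * \<phi> k x else 0)"
  proof (rule sum.cong[OF refl])
    fix j assume j: "j \<in> {1..N}"
    have "Xi N Om X \<phi> j (restr (closure (Om j)) v) x = (\<Sum>k\<in>{k\<in>X. k \<in> Om j}. v k / real (mu N Om k) * \<phi> k x)"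
      unfolding Xi_eq[OF j] restr_def using closure_subset by (intro sum.cong) auto
    also have "\<dots> = (\<Sum>k\<in>X. if k \<in> Om j then v k / real (mu N Om k) * \<phi> k x else 0)"
      by (rule sum.inter_filter[OF fe_parts(1)])
    finally show "Xi N Om X \<phi> j (restr (closure (Om j)) v) x = (\<Sum>k\<in>X. if k \<in> Om j then v k / real (mu N Om k) * \<phi> k x else 0)" .
  qed
  also have "\<dots> = (\<Sum>k\<in>X. \<Sum>j\<in>{1..N}. if k \<in> Om j then v k / real (mu N Om k) * \<phi> k x else 0)"
    by (rule sum.swap)
  also have "\<dots> = (\<Sum>k\<in>X. v k * \<phi> k x)"
  proof (rule sum.cong[OF refl])
    fix k assume k: "k \<in> X"
    have "(\<Sum>j\<in>{1..N}. if k \<in> Om j then v k / real (mu N Om k) * \<phi> k x else 0)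
        = real (card {j\<in>{1..N}. k \<in> Om j}) * (v k / real (mu N Om k) * \<phi> k x)"
      by (simp add: sum.inter_filter[symmetric])
    also have "\<dots> = v k * \<phi> k x"
    proof -
      have m: "real (card {j\<in>{1..N}. k \<in> Om j}) = real (mu N Om k)" unfolding mu_def ..
      have "real (mu N Om k) > 0" using mu_pos[OF k] by simp
      then show ?thesis unfolding m by (simp add: field_simps)
    qed
    finally show "(\<Sum>j\<in>{1..N}. if k \<in> Om j then v k / real (mu N Om k) * \<phi> k x else 0) = v k * \<phi> k x" .
  qed
  also have "\<dots> = v x" using Vh_repr[OF assms] by metis
  finally show "v x = (\<Sum>j\<in>{1..N}. Xi N Om X \<phi> j (restr (closure (Om j)) v) x)" by simp
qed


lemma Vtilde_G: "i \<in> {1..N} \<Longrightarrow> Vtilde Vh (Om i) \<subseteq> G"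
  unfolding Vtilde_def using restr_G Vh_G by blast

lemma fspan_fun: "(\<Sum>l\<in>I. fscale (r l) (f l)) = (\<lambda>x. \<Sum>l\<in>I. r l * f l x)"
  by (rule ext) (simp add: fsum_apply)

lemma eig_sub:
  fixes lamj :: "nat \<Rightarrow> ereal" and pj :: "nat \<Rightarrow> 'a \<Rightarrow> real"
  assumes j: "j \<in> {1..N}"
    and es: "geneo_eigensystem (aform A c (Om j)) (Xi N Om X \<phi> j) (Vtilde Vh (Om j)) lamj pj"
    and lp: "0 < lamj (m+1)" "lamj (m+1) < \<infinity>"
    and v: "v \<in> Vh"
  shows "\<exists>z e. z \<in> fspan ((\<lambda>l. Xi N Om X \<phi> j (pj l)) ` {1..m}) \<and> e \<in> G
        \<and> (\<forall>x. x \<notin> closure (Om j) \<longrightarrow> e x = 0)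
        \<and> (\<forall>x. Xi N Om X \<phi> j (restr (closure (Om j)) v) x = z x + e x)
        \<and> real_of_ereal (lamj (m+1)) * aform A c (Om j) e e \<le> aform A c (Om j) v v"
proof -
  define W where "W = Vtilde Vh (Om j)"
  define n where "n = fdim W"
  define I where "I = {1..n}"
  define a where "a l l' = aform A c (Om j) (pj l) (pj l')" for l l'
  define b where "b l l' = aform A c (Om j) (Xi N Om X \<phi> j (pj l)) (Xi N Om X \<phi> j (pj l'))" for l l'
  have finI: "finite I" unfolding I_def by simp
  have ep: "\<And>l. l \<in> I \<Longrightarrow> geneo_eigenpair (aform A c (Om j)) (Xi N Om X \<phi> j) W (lamj l) (pj l)"
    and cardp: "card (pj ` I) = n" and spanp: "fspan (pj ` I) = W"
    and sorted: "\<And>l l'. 1 \<le> l \<Longrightarrow> l \<le> l' \<Longrightarrow> l' \<le> n \<Longrightarrow> lamj l \<le> lamj l'"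
    using es unfolding geneo_eigensystem_def W_def[symmetric] n_def[symmetric] I_def Let_def by auto
  have pW: "pj l \<in> W" if "l \<in> I" for l using ep[OF that] unfolding geneo_eigenpair_def by auto
  have WG: "W \<subseteq> G" unfolding W_def using Vtilde_G[OF j] .
  have pG: "pj l \<in> G" if "l \<in> I" for l using pW[OF that] WG by auto
  have XpG: "Xi N Om X \<phi> j (pj l) \<in> G" for l using Xi_G[OF j] .
  have Oj: "Om j \<in> sets lebesgue" "Om j \<subseteq> \<Omega>" "open (Om j)" using Om_leb Om_sub j by auto
  have inj: "inj_on pj I" using cardp unfolding I_def by (intro eq_card_imp_inj_on) auto
  define vj where "vj = restr (closure (Om j)) v"
  have vjW: "vj \<in> W" unfolding W_def Vtilde_def vj_def using v by auto
  obtain u where u: "vj = (\<Sum>w\<in>pj ` I. fscale (u w) w)"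
    using vjW spanp module.span_finite[OF module_fscale, of "pj ` I"] finI by auto
  define cf where "cf l = u (pj l)" for l
  have vj_eq: "vj = (\<lambda>x. \<Sum>l\<in>I. cf l * pj l x)"
    using u unfolding cf_def by (simp add: sum.reindex[OF inj] fspan_fun)
  have eigF: "a l l' = r * b l l'" if "l \<in> I" "l' \<in> I" "lamj l = ereal r" for l l' r
    using ep[OF that(1)] pW[OF that(2)] that(3) unfolding geneo_eigenpair_def a_def b_def by auto
  have eigI: "b l l' = 0" if "l \<in> I" "l' \<in> I" "lamj l = \<infinity>" for l l'
    using ep[OF that(1)] pW[OF that(2)] that(3) unfolding geneo_eigenpair_def b_def by auto
  have notM: "\<forall>l\<in>I. lamj l \<noteq> -\<infinity>"
    using ep unfolding geneo_eigenpair_def by fastforce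
  define rs where "rs = real_of_ereal (lamj (m+1))"
  have rs: "lamj (m+1) = ereal rs" "0 < rs" using lp unfolding rs_def by (cases "lamj (m+1)"; auto)+
  have symab: "\<forall>l\<in>I. \<forall>l'\<in>I. a l l' = a l' l \<and> b l l' = b l' l"
    unfolding a_def b_def using aform_sym[OF Oj(1,2)] by auto
  have psdA: "0 \<le> (\<Sum>l\<in>I. \<Sum>l'\<in>I. e l * e l' * a l l')" for e
  proof -
    have "(\<Sum>l\<in>I. \<Sum>l'\<in>I. e l * e l' * a l l') = aform A c (Om j) (\<lambda>x. \<Sum>l\<in>I. e l * pj l x) (\<lambda>x. \<Sum>l\<in>I. e l * pj l x)"
      unfolding a_def by (rule aform_bilin[symmetric]) (use finI pG Oj in auto)
    then show ?thesis using aform_psd[OF Oj(1,2)] by simp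
  qed
  have psdB: "0 \<le> (\<Sum>l\<in>I. \<Sum>l'\<in>I. e l * e l' * b l l')" for e
  proof -
    have "(\<Sum>l\<in>I. \<Sum>l'\<in>I. e l * e l' * b l l') = aform A c (Om j) (\<lambda>x. \<Sum>l\<in>I. e l * Xi N Om X \<phi> j (pj l) x) (\<lambda>x. \<Sum>l\<in>I. e l * Xi N Om X \<phi> j (pj l) x)"
      unfolding b_def by (rule aform_bilin[symmetric]) (use finI XpG Oj in auto)
    then show ?thesis using aform_psd[OF Oj(1,2)] by simp
  qed
  have core: "rs * (\<Sum>l\<in>{l\<in>I. \<not> lamj l < ereal rs}. \<Sum>l'\<in>{l\<in>I. \<not> lamj l < ereal rs}. cf l * cf l' * b l l')
         \<le> (\<Sum>l\<in>I. \<Sum>l'\<in>I. cf l * cf l' * a l l')"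
    by (rule eig_core[OF finI symab psdA psdB eigF eigI notM rs(2)])
  define L where "L = {l\<in>I. lamj l < ereal rs}"
  define sL where "sL l = (if l \<in> L then cf l else 0)" for l
  define eL where "eL l = (if l \<in> L then 0 else cf l)" for l
  define z where "z = (\<lambda>x. \<Sum>l\<in>I. sL l * Xi N Om X \<phi> j (pj l) x)"
  define e where "e = (\<lambda>x. \<Sum>l\<in>I. eL l * Xi N Om X \<phi> j (pj l) x)"
  have LS: "l \<le> m" if "l \<in> L" for l
  proof (rule ccontr)
    assume "\<not> l \<le> m"
    then have "lamj (m+1) \<le> lamj l" using sorted[of "m+1" l] that unfolding L_def I_def by auto
    then show False using that rs(1) unfolding L_def by auto
  qed
  have zspan: "z \<in> fspan ((\<lambda>l. Xi N Om X \<phi> j (pj l)) ` {1..m})"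
  proof -
    have "z = (\<Sum>l\<in>I. fscale (sL l) (Xi N Om X \<phi> j (pj l)))" unfolding z_def fspan_fun ..
    also have "\<dots> \<in> fspan ((\<lambda>l. Xi N Om X \<phi> j (pj l)) ` {1..m})"
    proof (rule module.span_sum[OF module_fscale])
      fix l assume l: "l \<in> I"
      show "fscale (sL l) (Xi N Om X \<phi> j (pj l)) \<in> fspan ((\<lambda>l. Xi N Om X \<phi> j (pj l)) ` {1..m})"
      proof (cases "l \<in> L")
        case True
        then have "l \<in> {1..m}" using LS l unfolding I_def by auto
        then show ?thesis
          by (intro module.span_scale[OF module_fscale] module.span_base[OF module_fscale]) auto
      next
        case False
        then have "fscale (sL l) (Xi N Om X \<phi> j (pj l)) = 0" unfolding sL_def by (simp add: fscale_def fun_eq_iff)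
        then show ?thesis using module.span_zero[OF module_fscale] by metis
      qed
    qed
    finally show ?thesis .
  qed
  have eG: "e \<in> G" unfolding e_def using G_lin[OF finI, of "\<lambda>l. Xi N Om X \<phi> j (pj l)" eL] XpG by auto
  have evan: "\<forall>x. x \<notin> closure (Om j) \<longrightarrow> e x = 0" unfolding e_def using Xi_vanish[OF j] by simp
  have split: "\<forall>x. Xi N Om X \<phi> j vj x = z x + e x"
  proof
    fix x
    have "Xi N Om X \<phi> j vj x = (\<Sum>l\<in>I. cf l * Xi N Om X \<phi> j (pj l) x)"
      unfolding vj_eq Xi_lin[OF finI] ..
    also have "\<dots> = (\<Sum>l\<in>I. sL l * Xi N Om X \<phi> j (pj l) x + eL l * Xi N Om X \<phi> j (pj l) x)"
      by (intro sum.cong) (auto simp: sL_def eL_def)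
    finally show "Xi N Om X \<phi> j vj x = z x + e x" unfolding z_def e_def by (simp add: sum.distrib)
  qed
  have ae: "aform A c (Om j) e e = (\<Sum>l\<in>I. \<Sum>l'\<in>I. eL l * eL l' * b l l')"
    unfolding e_def b_def by (rule aform_bilin) (use finI XpG Oj in auto)
  also have "\<dots> = (\<Sum>l\<in>{l\<in>I. \<not> lamj l < ereal rs}. \<Sum>l'\<in>{l\<in>I. \<not> lamj l < ereal rs}. cf l * cf l' * b l l')"
    unfolding dsum_filter[OF finI] by (intro sum.cong refl) (auto simp: eL_def L_def)
  finally have ae: "aform A c (Om j) e e = \<dots>" .
  have av: "aform A c (Om j) vj vj = (\<Sum>l\<in>I. \<Sum>l'\<in>I. cf l * cf l' * a l l')"
    unfolding vj_eq a_def by (rule aform_bilin) (use finI pG Oj in auto)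
  have av2: "aform A c (Om j) vj vj = aform A c (Om j) v v"
    by (rule aform_local[OF Oj(3)]) (use closure_subset in \<open>auto simp: vj_def restr_def\<close>)
  show ?thesis
    using zspan eG evan split core ae av av2 unfolding vj_def rs_def[symmetric]
    by (intro exI[of _ z] exI[of _ e]) auto
qed


lemma final:
  fixes lam :: "nat \<Rightarrow> nat \<Rightarrow> ereal" and p :: "nat \<Rightarrow> nat \<Rightarrow> 'a \<Rightarrow> real" and m :: "nat \<Rightarrow> nat"
  assumes eig: "\<forall>j\<in>{1..N}. geneo_eigensystem (aform A c (Om j)) (Xi N Om X \<phi> j)
                 (Vtilde Vh (Om j)) (lam j) (p j)"
    and lam_pos: "\<forall>j\<in>{1..N}. 0 < lam j (m j + 1) \<and> lam j (m j + 1) < \<infinity>"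
    and N_pos: "1 \<le> N"
  shows "\<forall>v\<in>Vh.
     (let V0 = fspan {RT (Om j) (Xi N Om X \<phi> j (p j l)) | j l. j \<in> {1..N} \<and> l \<in> {1..m j}};
          \<Theta> = 1 / Min ((\<lambda>j. real_of_ereal (lam j (m j + 1))) ` {1..N})
      in Inf {(anorm A c \<Omega> (v - z))\<^sup>2 | z. z \<in> V0}
           \<le> (real (k0 T N Om))\<^sup>2 * \<Theta> * (anorm A c \<Omega> v)\<^sup>2)"
proof (intro ballI)
  fix v assume v: "v \<in> Vh"
  define V0 where "V0 = fspan {RT (Om j) (Xi N Om X \<phi> j (p j l)) | j l. j \<in> {1..N} \<and> l \<in> {1..m j}}"
  define Mn where "Mn = Min ((\<lambda>j. real_of_ereal (lam j (m j + 1))) ` {1..N})"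
  define \<Theta> where "\<Theta> = 1 / Mn"
  define K where "K = real (k0 T N Om)"
  have rpos: "0 < real_of_ereal (lam j (m j + 1))" if "j \<in> {1..N}" for j
  proof -
    have h: "0 < lam j (m j + 1)" "lam j (m j + 1) < \<infinity>" using lam_pos that by auto
    then show ?thesis by (cases "lam j (m j + 1)") auto
  qed
  have Mn_pos: "0 < Mn" unfolding Mn_def using rpos N_pos by (subst Min_gr_iff) auto
  have Mn_le: "Mn \<le> real_of_ereal (lam j (m j + 1))" if "j \<in> {1..N}" for j
    unfolding Mn_def using that by (intro Min_le) auto
  have K0: "0 \<le> K" unfolding K_def by simp
  define P where "P j z e \<longleftrightarrow> z \<in> fspan ((\<lambda>l. Xi N Om X \<phi> j (p j l)) ` {1..m j}) \<and> e \<in> G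
        \<and> (\<forall>x. x \<notin> closure (Om j) \<longrightarrow> e x = 0)
        \<and> (\<forall>x. Xi N Om X \<phi> j (restr (closure (Om j)) v) x = z x + e x)
        \<and> real_of_ereal (lam j (m j + 1)) * aform A c (Om j) e e \<le> aform A c (Om j) v v" for j z e
  have "\<forall>j\<in>{1..N}. \<exists>ze. P j (fst ze) (snd ze)"
  proof
    fix j assume j: "j \<in> {1..N}"
    obtain z e where "P j z e"
      using eig_sub[OF j _ _ _ v, of "lam j" "p j" "m j"] eig lam_pos j unfolding P_def by blast
    then show "\<exists>ze. P j (fst ze) (snd ze)" by (intro exI[of _ "(z, e)"]) simp
  qed
  then obtain ZE where ZE: "\<forall>j\<in>{1..N}. P j (fst (ZE j)) (snd (ZE j))" by (metis bchoice)
  define z where "z j = fst (ZE j)" for j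
  define e where "e j = snd (ZE j)" for j
  have Pj: "P j (z j) (e j)" if "j \<in> {1..N}" for j using ZE that unfolding z_def e_def by auto
  define Z where "Z = (\<lambda>x. \<Sum>j\<in>{1..N}. z j x)"
  have ZV0: "Z \<in> V0"
  proof -
    have "Z = (\<Sum>j\<in>{1..N}. z j)" unfolding Z_def by (rule ext) (simp add: fsum_apply)
    also have "\<dots> \<in> V0" unfolding V0_def
    proof (rule module.span_sum[OF module_fscale])
      fix j assume j: "j \<in> {1..N}"
      have "(\<lambda>l. Xi N Om X \<phi> j (p j l)) ` {1..m j} \<subseteq> {RT (Om j) (Xi N Om X \<phi> j (p j l)) | j l. j \<in> {1..N} \<and> l \<in> {1..m j}}"
      proof
        fix f assume "f \<in> (\<lambda>l. Xi N Om X \<phi> j (p j l)) ` {1..m j}"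
        then obtain l where l: "l \<in> {1..m j}" "f = Xi N Om X \<phi> j (p j l)" by auto
        then have "f = RT (Om j) (Xi N Om X \<phi> j (p j l))" using RT_Xi[OF j] by simp
        then show "f \<in> {RT (Om j) (Xi N Om X \<phi> j (p j l)) | j l. j \<in> {1..N} \<and> l \<in> {1..m j}}"
          using l j by blast
      qed
      then show "z j \<in> fspan {RT (Om j) (Xi N Om X \<phi> j (p j l)) | j l. j \<in> {1..N} \<and> l \<in> {1..m j}}"
        using Pj[OF j] module.span_mono[OF module_fscale] unfolding P_def by blast
    qed
    finally show ?thesis .
  qed
  have vZ: "v - Z = (\<lambda>x. \<Sum>j\<in>{1..N}. e j x)"
  proof
    fix x
    have "v x = (\<Sum>j\<in>{1..N}. Xi N Om X \<phi> j (restr (closure (Om j)) v) x)" using pou[OF v] by metis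
    also have "\<dots> = (\<Sum>j\<in>{1..N}. z j x + e j x)" using Pj unfolding P_def by (intro sum.cong) auto
    finally show "(v - Z) x = (\<Sum>j\<in>{1..N}. e j x)" unfolding Z_def by (simp add: sum.distrib)
  qed
  have ms: "aform A c \<Omega> (v - Z) (v - Z) \<le> K * (\<Sum>j\<in>{1..N}. aform A c (Om j) (e j) (e j))"
    unfolding vZ K_def by (rule main_sum) (use Pj in \<open>auto simp: P_def\<close>)
  have ej: "aform A c (Om j) (e j) (e j) \<le> \<Theta> * aform A c (Om j) v v" if j: "j \<in> {1..N}" for j
  proof -
    have b: "real_of_ereal (lam j (m j + 1)) * aform A c (Om j) (e j) (e j) \<le> aform A c (Om j) v v"
      using Pj[OF j] unfolding P_def by auto
    have a0: "0 \<le> aform A c (Om j) (e j) (e j)" using aform_psd Om_leb Om_sub j by blast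
    have "Mn * aform A c (Om j) (e j) (e j) \<le> real_of_ereal (lam j (m j + 1)) * aform A c (Om j) (e j) (e j)"
      using Mn_le[OF j] a0 by (rule mult_right_mono)
    then have "Mn * aform A c (Om j) (e j) (e j) \<le> aform A c (Om j) v v" using b by linarith
    then show ?thesis unfolding \<Theta>_def using Mn_pos by (simp add: field_simps)
  qed
  have "(\<Sum>j\<in>{1..N}. aform A c (Om j) (e j) (e j)) \<le> (\<Sum>j\<in>{1..N}. \<Theta> * aform A c (Om j) v v)"
    using ej by (rule sum_mono)
  also have "\<dots> = \<Theta> * (\<Sum>j\<in>{1..N}. aform A c (Om j) v v)" by (simp add: sum_distrib_left)
  also have "\<dots> \<le> \<Theta> * (K * aform A c \<Omega> v v)"
    using loc_sum[OF Vh_G[THEN subsetD, OF v]] Mn_pos unfolding \<Theta>_def K_def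
    by (intro mult_left_mono) auto
  finally have s2: "(\<Sum>j\<in>{1..N}. aform A c (Om j) (e j) (e j)) \<le> \<Theta> * (K * aform A c \<Omega> v v)" .
  have "aform A c \<Omega> (v - Z) (v - Z) \<le> K * (\<Theta> * (K * aform A c \<Omega> v v))"
    using ms mult_left_mono[OF s2 K0] by linarith
  then have main: "aform A c \<Omega> (v - Z) (v - Z) \<le> K^2 * \<Theta> * aform A c \<Omega> v v"
    by (simp add: power2_eq_square mult_ac)
  have an: "(anorm A c \<Omega> u)\<^sup>2 = aform A c \<Omega> u u" for u
    unfolding anorm_def using aform_psd[OF O_leb order_refl] by simp
  have "Inf {(anorm A c \<Omega> (v - z))\<^sup>2 | z. z \<in> V0} \<le> (anorm A c \<Omega> (v - Z))\<^sup>2"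
    by (rule cInf_lower) (use ZV0 in \<open>auto intro!: bdd_belowI[of _ 0]\<close>)
  also have "\<dots> \<le> K^2 * \<Theta> * (anorm A c \<Omega> v)\<^sup>2" unfolding an using main .
  finally show "let V0 = fspan {RT (Om j) (Xi N Om X \<phi> j (p j l)) | j l. j \<in> {1..N} \<and> l \<in> {1..m j}};
          \<Theta> = 1 / Min ((\<lambda>j. real_of_ereal (lam j (m j + 1))) ` {1..N})
      in Inf {(anorm A c \<Omega> (v - z))\<^sup>2 | z. z \<in> V0}
           \<le> (real (k0 T N Om))\<^sup>2 * \<Theta> * (anorm A c \<Omega> v)\<^sup>2"
    unfolding Let_def V0_def[symmetric] Mn_def[symmetric] \<Theta>_def[symmetric] K_def[symmetric] .
qed

end



theorem lemma3p2:
  fixes \<Omega> :: "'a::euclidean_space set"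
    and T :: "'a set set"
    and A :: "'a \<Rightarrow> 'a \<Rightarrow> 'a" and amax :: real
    and c :: "'a \<Rightarrow> real"
    and X :: "'a set" and \<phi> :: "'a \<Rightarrow> 'a \<Rightarrow> real" and Vh :: "('a \<Rightarrow> real) set"
    and N :: nat and T' :: "nat \<Rightarrow> 'a set set" and Om :: "nat \<Rightarrow> 'a set"
    and lam :: "nat \<Rightarrow> nat \<Rightarrow> ereal" and p :: "nat \<Rightarrow> nat \<Rightarrow> 'a \<Rightarrow> real"
    and m :: "nat \<Rightarrow> nat"
  assumes dom: "polyhedral_domain \<Omega> T"
    and A_lin: "\<forall>x\<in>\<Omega>. linear (A x)"
    and A_sym: "\<forall>x\<in>\<Omega>. \<forall>u w. A x u \<bullet> w = u \<bullet> A x w"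
    and A_ell: "\<forall>x\<in>\<Omega>. \<forall>\<xi>. (norm \<xi>)\<^sup>2 \<le> A x \<xi> \<bullet> \<xi> \<and> A x \<xi> \<bullet> \<xi> \<le> amax * (norm \<xi>)\<^sup>2"
    and A_meas: "\<forall>u w. (\<lambda>x. A x u \<bullet> w) \<in> borel_measurable lebesgue"
    and c_meas: "c \<in> borel_measurable lebesgue"
    and c_nonneg: "\<forall>x\<in>\<Omega>. 0 \<le> c x"
    and c_bdd: "\<exists>M. AE x in lebesgue_on \<Omega>. c x \<le> M"
    and fe: "nodal_fe_space T \<Omega> X \<phi> Vh"
    and N_pos: "1 \<le> N"
    and part: "\<forall>i\<in>{1..N}. T' i \<subseteq> T \<and> T' i \<noteq> {}"
    and part_disj: "\<forall>i\<in>{1..N}. \<forall>i'\<in>{1..N}. i \<noteq> i' \<longrightarrow> T' i \<inter> T' i' = {}"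
    and part_cover: "(\<Union>i\<in>{1..N}. T' i) = T"
    and overlap: "\<forall>i\<in>{1..N}. \<exists>L\<ge>1. Om i = interior (\<Union>((add_layer T ^^ L) (T' i)))"
    and eig: "\<forall>j\<in>{1..N}. geneo_eigensystem (aform A c (Om j)) (Xi N Om X \<phi> j)
                 (Vtilde Vh (Om j)) (lam j) (p j)"
    and m_range: "\<forall>j\<in>{1..N}. 1 \<le> m j \<and> m j \<le> fdim (Vloc Vh (Om j)) - 1"
    and lam_pos: "\<forall>j\<in>{1..N}. 0 < lam j (m j + 1) \<and> lam j (m j + 1) < \<infinity>"
  shows "\<forall>v\<in>Vh.
     (let V0 = fspan {RT (Om j) (Xi N Om X \<phi> j (p j l)) | j l. j \<in> {1..N} \<and> l \<in> {1..m j}};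
          \<Theta> = 1 / Min ((\<lambda>j. real_of_ereal (lam j (m j + 1))) ` {1..N})
      in Inf {(anorm A c \<Omega> (v - z))\<^sup>2 | z. z \<in> V0}
           \<le> (real (k0 T N Om))\<^sup>2 * \<Theta> * (anorm A c \<Omega> v)\<^sup>2)"
  proof -
  interpret geneo \<Omega> T A amax c X \<phi> Vh N T' Om
    by (rule geneo.intro[OF dom A_lin A_sym A_ell A_meas c_meas c_nonneg c_bdd fe part part_cover overlap])
  show ?thesis by (rule final[OF eig lam_pos N_pos])
qed


end
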